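(* Let $P$ be a tree poset of height $k$, let $q\geq k$ and $\ell$ be positive integers and $\varepsilon>0$. Then there exists $\gamma=\gamma(\varepsilon,q,\ell)>0$ such that, for $n$ sufficiently large, the following holds for every $v\in P$ and every poset homomorphism $\mathrm{r}:P\to[q]$. Let $\mathcal{F}\subseteq\widetilde{\mathcal{B}}_n$ be an $\ell$-gapped family with $\mu(\mathcal{F})\geq q-1+\varepsilon$, and let $\Gamma$ be a $(\frac{\gamma}{2},\ell,\mathcal{F})$-bounded family. Then there is $F\in\mathcal{F}$ such that the number of injective induced homomorphisms $\varphi:P\to\mathcal{F}$ with $\varphi(P)\notin\Gamma$ and $\varphi(v)=F$ is at least $$\left(\frac{\gamma}{2}\right)^{|P|-1}\prod_{xy\in H(P)}n^{\ell|\mathrm{r}(y)-\mathrm{r}(x)|}.$$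
   Context: $\widetilde{\mathcal{B}}_n=\{F\subseteq[n]: |\,|F|-n/2\,|<2\sqrt{n\ln n}\}$. A tree poset is a finite poset whose Hasse diagram is a tree; height is the largest number of elements in a chain; $|P|$ is the number of elements. $H(P)$ is the directed Hasse diagram: an edge $xy$ from $x$ to $y$ when $x<_P y$ and no $z$ satisfies $x<_P z<_P y$. Here $[q]$ carries the reverse of the natural order, so a poset homomorphism $\mathrm{r}:P\to[q]$ means $x<_P y\Rightarrow \mathrm{r}(x)>\mathrm{r}(y)$. An injective induced homomorphism $\varphi:P\to\mathcal{F}$ is an injective map with $\varphi(x)\subsetneq\varphi(y)$ iff $x<_P y$; $\varphi(P)$ is its image. $\mu(\mathcal{F})=\sum_{F\in\mathcal{F}}1/\binom{n}{|F|}$. $\mathcal{F}$ is $\ell$-gapped if $|G\setminus F|\ge\ell$ whenever $F,G\in\mathcal{F}$ and $F\subsetneq G$. For an $\ell$-gapped $\mathcal{F}$, a collection $\Gamma\subseteq2^{\mathcal{F}}$ is $(\gamma,\ell,\mathcal{F})$-bounded if (1) $\{F\}\notin\Gamma$ for every $F\in\mathcal{F}$, and (2) for every $\mathcal{D}\notin\Gamma$, the number of $F\in\mathcal{F}$ with $\{F\}\cup\mathcal{D}\in\Gamma$ is less than $\gamma n^{\ell}$. *)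

theory Defs
  imports Complex_Main "HOL-Library.FuncSet"
begin

definition strict_poset :: "nat set \<Rightarrow> (nat \<Rightarrow> nat \<Rightarrow> bool) \<Rightarrow> bool" where
  "strict_poset V lt \<longleftrightarrow> finite V \<and>
     (\<forall>x\<in>V. \<not> lt x x) \<and>
     (\<forall>x\<in>V. \<forall>y\<in>V. \<forall>z\<in>V. lt x y \<and> lt y z \<longrightarrow> lt x z)"

definition hasse_edge :: "nat set \<Rightarrow> (nat \<Rightarrow> nat \<Rightarrow> bool) \<Rightarrow> nat \<Rightarrow> nat \<Rightarrow> bool" where
  "hasse_edge V lt x y \<longleftrightarrow> x \<in> V \<and> y \<in> V \<and> lt x y \<and> \<not> (\<exists>z\<in>V. lt x z \<and> lt z y)"

definition hasse_diagram :: "nat set \<Rightarrow> (nat \<Rightarrow> nat \<Rightarrow> bool) \<Rightarrow> (nat \<times> nat) set" where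
  "hasse_diagram V lt = {(x, y). hasse_edge V lt x y}"

definition hasse_adj :: "nat set \<Rightarrow> (nat \<Rightarrow> nat \<Rightarrow> bool) \<Rightarrow> nat \<Rightarrow> nat \<Rightarrow> bool" where
  "hasse_adj V lt x y \<longleftrightarrow> hasse_edge V lt x y \<or> hasse_edge V lt y x"

definition graph_connected :: "nat set \<Rightarrow> (nat \<Rightarrow> nat \<Rightarrow> bool) \<Rightarrow> bool" where
  "graph_connected V adj \<longleftrightarrow>
     (\<forall>x\<in>V. \<forall>y\<in>V. (\<lambda>a b. a \<in> V \<and> b \<in> V \<and> adj a b)\<^sup>*\<^sup>* x y)"

definition graph_has_cycle :: "nat set \<Rightarrow> (nat \<Rightarrow> nat \<Rightarrow> bool) \<Rightarrow> bool" where
  "graph_has_cycle V adj \<longleftrightarrow>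
     (\<exists>cs. length cs \<ge> 3 \<and> distinct cs \<and> set cs \<subseteq> V \<and>
        (\<forall>i < length cs - 1. adj (cs ! i) (cs ! Suc i)) \<and> adj (last cs) (hd cs))"

definition tree_poset :: "nat set \<Rightarrow> (nat \<Rightarrow> nat \<Rightarrow> bool) \<Rightarrow> bool" where
  "tree_poset V lt \<longleftrightarrow> strict_poset V lt \<and> V \<noteq> {} \<and>
     graph_connected V (hasse_adj V lt) \<and> \<not> graph_has_cycle V (hasse_adj V lt)"

definition is_chain :: "nat set \<Rightarrow> (nat \<Rightarrow> nat \<Rightarrow> bool) \<Rightarrow> nat set \<Rightarrow> bool" where
  "is_chain V lt C \<longleftrightarrow> C \<subseteq> V \<and> (\<forall>x\<in>C. \<forall>y\<in>C. x = y \<or> lt x y \<or> lt y x)"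

definition poset_height :: "nat set \<Rightarrow> (nat \<Rightarrow> nat \<Rightarrow> bool) \<Rightarrow> nat" where
  "poset_height V lt = Max {card C | C. is_chain V lt C}"

text \<open>Homomorphism into [q] = {1..q} carrying the reverse of the natural order.\<close>
definition rev_hom :: "nat set \<Rightarrow> (nat \<Rightarrow> nat \<Rightarrow> bool) \<Rightarrow> nat \<Rightarrow> (nat \<Rightarrow> nat) \<Rightarrow> bool" where
  "rev_hom V lt q r \<longleftrightarrow> (\<forall>x\<in>V. r x \<in> {1..q}) \<and>
     (\<forall>x\<in>V. \<forall>y\<in>V. lt x y \<longrightarrow> r x > r y)"

definition middle_layers :: "nat \<Rightarrow> nat set set" where
  "middle_layers n = {F. F \<subseteq> {1..n} \<and>
      \<bar>real (card F) - real n / 2\<bar> < 2 * sqrt (real n * ln (real n))}"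

definition lubell_mass :: "nat \<Rightarrow> nat set set \<Rightarrow> real" where
  "lubell_mass n \<F> = (\<Sum>F\<in>\<F>. 1 / real (n choose card F))"

definition gapped :: "nat \<Rightarrow> nat set set \<Rightarrow> bool" where
  "gapped l \<F> \<longleftrightarrow> (\<forall>F\<in>\<F>. \<forall>G\<in>\<F>. F \<subset> G \<longrightarrow> card (G - F) \<ge> l)"

definition bounded_collection :: "nat \<Rightarrow> real \<Rightarrow> nat \<Rightarrow> nat set set \<Rightarrow> nat set set set \<Rightarrow> bool" where
  "bounded_collection n \<gamma> l \<F> \<Gamma> \<longleftrightarrow> \<Gamma> \<subseteq> Pow \<F> \<and>
     (\<forall>F\<in>\<F>. {F} \<notin> \<Gamma>) \<and>
     (\<forall>D. D \<subseteq> \<F> \<and> D \<notin> \<Gamma> \<longrightarrow>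
        real (card {F\<in>\<F>. insert F D \<in> \<Gamma>}) < \<gamma> * real n ^ l)"

definition inj_induced_homs :: "nat set \<Rightarrow> (nat \<Rightarrow> nat \<Rightarrow> bool) \<Rightarrow> nat set set \<Rightarrow> (nat \<Rightarrow> nat set) set" where
  "inj_induced_homs V lt \<F> = {\<phi> \<in> V \<rightarrow>\<^sub>E \<F>. inj_on \<phi> V \<and>
     (\<forall>x\<in>V. \<forall>y\<in>V. \<phi> x \<subset> \<phi> y \<longleftrightarrow> lt x y)}"

end

theory Submission
  imports Defs "HOL-Combinatorics.Multiset_Permutations" "HOL-Combinatorics.Transposition"
begin

lemma perm_split_card:
  assumes fin: "finite A" and FA: "F \<subseteq> A" and k: "card F = k"
  shows "card {\<sigma> \<in> permutations_of_set A. set (take k \<sigma>) = F \<and> P (take k \<sigma>) \<and> Q (drop k \<sigma>)}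
       = card {\<alpha> \<in> permutations_of_set F. P \<alpha>} * card {\<beta> \<in> permutations_of_set (A - F). Q \<beta>}"
proof -
  define X where "X = {\<alpha> \<in> permutations_of_set F. P \<alpha>}"
  define Y where "Y = {\<beta> \<in> permutations_of_set (A - F). Q \<beta>}"
  have lenX: "\<And>\<alpha>. \<alpha> \<in> X \<Longrightarrow> length \<alpha> = k"
    using k by (auto simp: X_def length_finite_permutations_of_set)
  have eq: "{\<sigma> \<in> permutations_of_set A. set (take k \<sigma>) = F \<and> P (take k \<sigma>) \<and> Q (drop k \<sigma>)}
       = (\<lambda>(\<alpha>,\<beta>). \<alpha> @ \<beta>) ` (X \<times> Y)"
  proof (intro equalityI subsetI)
    fix \<sigma> assume s: "\<sigma> \<in> {\<sigma> \<in> permutations_of_set A. set (take k \<sigma>) = F \<and> P (take k \<sigma>) \<and> Q (drop k \<sigma>)}"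
    then have sA: "set \<sigma> = A" "distinct \<sigma>" and tk: "set (take k \<sigma>) = F" "P (take k \<sigma>)" "Q (drop k \<sigma>)"
      by (auto simp: permutations_of_set_def)
    have d: "distinct (take k \<sigma>)" "distinct (drop k \<sigma>)" using sA(2) by auto
    have disj: "set (take k \<sigma>) \<inter> set (drop k \<sigma>) = {}"
      using sA(2) by (metis append_take_drop_id distinct_append)
    have un: "set (take k \<sigma>) \<union> set (drop k \<sigma>) = A"
      using sA(1) by (metis append_take_drop_id set_append)
    have "set (drop k \<sigma>) = A - F" using disj un tk(1) by blast
    then have "take k \<sigma> \<in> X" "drop k \<sigma> \<in> Y" using d tk by (auto simp: X_def Y_def permutations_of_set_def)
    then show "\<sigma> \<in> (\<lambda>(\<alpha>,\<beta>). \<alpha> @ \<beta>) ` (X \<times> Y)"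
      by (intro image_eqI[of _ _ "(take k \<sigma>, drop k \<sigma>)"]) auto
  next
    fix \<sigma> assume "\<sigma> \<in> (\<lambda>(\<alpha>,\<beta>). \<alpha> @ \<beta>) ` (X \<times> Y)"
    then obtain \<alpha> \<beta> where ab: "\<sigma> = \<alpha> @ \<beta>" "\<alpha> \<in> X" "\<beta> \<in> Y" by auto
    have la: "length \<alpha> = k" using lenX ab by auto
    have a: "set \<alpha> = F" "distinct \<alpha>" "P \<alpha>" using ab by (auto simp: X_def permutations_of_set_def)
    have b: "set \<beta> = A - F" "distinct \<beta>" "Q \<beta>" using ab by (auto simp: Y_def permutations_of_set_def)
    have "\<sigma> \<in> permutations_of_set A" using a b ab FA by (auto simp: permutations_of_set_def)
    moreover have "take k \<sigma> = \<alpha>" "drop k \<sigma> = \<beta>" using ab la by auto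
    ultimately show "\<sigma> \<in> {\<sigma> \<in> permutations_of_set A. set (take k \<sigma>) = F \<and> P (take k \<sigma>) \<and> Q (drop k \<sigma>)}"
      using a b by auto
  qed
  have inj: "inj_on (\<lambda>(\<alpha>,\<beta>). \<alpha> @ \<beta>) (X \<times> Y)"
  proof (rule inj_onI)
    fix u w assume u: "u \<in> X \<times> Y" and w: "w \<in> X \<times> Y" and e: "(\<lambda>(\<alpha>,\<beta>). \<alpha> @ \<beta>) u = (\<lambda>(\<alpha>,\<beta>). \<alpha> @ \<beta>) w"
    obtain a1 b1 a2 b2 where "u = (a1,b1)" "w = (a2,b2)" by (cases u, cases w)
    moreover have "length a1 = k" "length a2 = k" using u w lenX \<open>u = (a1,b1)\<close> \<open>w = (a2,b2)\<close> by auto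
    ultimately show "u = w" using e by auto
  qed
  have "card ((\<lambda>(\<alpha>,\<beta>). \<alpha> @ \<beta>) ` (X \<times> Y)) = card (X \<times> Y)" by (rule card_image[OF inj])
  also have "\<dots> = card X * card Y" by (rule card_cartesian_product)
  finally have c: "card ((\<lambda>(\<alpha>,\<beta>). \<alpha> @ \<beta>) ` (X \<times> Y)) = card X * card Y" .
  have "card {\<sigma> \<in> permutations_of_set A. set (take k \<sigma>) = F \<and> P (take k \<sigma>) \<and> Q (drop k \<sigma>)} = card X * card Y"
    by (subst eq) (rule c)
  then show ?thesis by (simp only: X_def Y_def)
qed

lemma perm_pos_card:
  assumes fin: "finite B" and b: "b \<in> B" and p: "p < card B"
  shows "card {\<beta> \<in> permutations_of_set B. \<beta> ! p = b} = fact (card B - 1)"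
proof -
  define C where "C = (\<lambda>b. {\<beta> \<in> permutations_of_set B. \<beta> ! p = b})"
  have mapC: "map (Transposition.transpose b1 b2) \<beta> \<in> C b2"
    if b1: "b1 \<in> B" and b2: "b2 \<in> B" and \<beta>: "\<beta> \<in> C b1" for b1 b2 \<beta>
  proof -
    let ?t = "Transposition.transpose b1 b2"
    have sb: "set \<beta> = B" "distinct \<beta>" "\<beta> ! p = b1" using \<beta> by (auto simp: C_def permutations_of_set_def)
    have "length \<beta> = card B" using \<beta> by (auto simp: C_def length_finite_permutations_of_set)
    then have "map ?t \<beta> ! p = ?t (\<beta> ! p)" using p by simp
    then have "map ?t \<beta> ! p = b2" using sb(3) by simp
    moreover have "distinct (map ?t \<beta>)" using sb(2) by (simp add: distinct_map)
    moreover have "set (map ?t \<beta>) = B" using sb(1) b1 b2 by simp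
    ultimately show ?thesis by (simp add: C_def permutations_of_set_def)
  qed
  have same: "card (C b1) \<le> card (C b2)" if b1: "b1 \<in> B" and b2: "b2 \<in> B" for b1 b2
  proof -
    let ?t = "Transposition.transpose b1 b2"
    have "map ?t ` C b1 \<subseteq> C b2" using mapC b1 b2 by blast
    moreover have "inj_on (map ?t) (C b1)" by (rule inj_on_mapI) simp
    moreover have "finite (C b2)" by (simp add: C_def)
    ultimately show ?thesis by (metis card_image card_mono)
  qed
  have union: "permutations_of_set B = (\<Union>b'\<in>B. C b')"
  proof (intro equalityI subsetI)
    fix \<beta> assume "\<beta> \<in> permutations_of_set B"
    moreover then have "length \<beta> = card B" by (simp add: length_finite_permutations_of_set)
    ultimately have "\<beta> ! p \<in> B" using p by (auto simp: permutations_of_set_def)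
    then show "\<beta> \<in> (\<Union>b'\<in>B. C b')" using \<open>\<beta> \<in> permutations_of_set B\<close> by (auto simp: C_def)
  qed (auto simp: C_def)
  have "fact (card B) = card (permutations_of_set B)" using fin by simp
  also have "\<dots> = card (\<Union>b'\<in>B. C b')" using union by simp
  also have "\<dots> = (\<Sum>b'\<in>B. card (C b'))"
    by (rule card_UN_disjoint) (use fin in \<open>auto simp: C_def\<close>)
  also have "\<dots> = (\<Sum>b'\<in>B. card (C b))" using same b by (intro sum.cong) (auto intro: antisym)
  also have "\<dots> = card B * card (C b)" by simp
  finally have e: "fact (card B) = card B * card (C b)" .
  obtain m where m: "card B = Suc m" using p by (cases "card B") auto
  have f: "fact (card B) = card B * (fact (card B - 1) :: nat)" unfolding m by simp
  have "card B * card (C b) = card B * fact (card B - 1)" using e f by linarith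
  then have "card (C b) = fact (card B - 1)" using m mult_left_cancel[of "card B"] by simp
  then show ?thesis by (simp add: C_def)
qed


lemma chain_card:
  assumes fin: "finite A" and FA: "F \<subseteq> A" and k: "card F = k"
  shows "card {\<sigma> \<in> permutations_of_set A. set (take k \<sigma>) = F} = fact k * fact (card A - k)"
proof -
  have "card {\<sigma> \<in> permutations_of_set A. set (take k \<sigma>) = F \<and> True \<and> True}
     = card {\<alpha> \<in> permutations_of_set F. True} * card {\<beta> \<in> permutations_of_set (A - F). True}"
    by (rule perm_split_card[OF fin FA k])
  moreover have "finite F" using fin FA finite_subset by blast
  moreover have "card (A - F) = card A - k" using k FA fin by (simp add: card_Diff_subset finite_subset)
  ultimately show ?thesis using k fin by simp
qed

lemma chain2_card:
  assumes fin: "finite A" and FG: "F \<subseteq> G" and GA: "G \<subseteq> A" and k: "card F = k" and m: "card G = m"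
  shows "card {\<sigma> \<in> permutations_of_set A. set (take k \<sigma>) = F \<and> set (take m \<sigma>) = G}
       = fact k * fact (m - k) * fact (card A - m)"
proof -
  have finG: "finite G" using fin GA finite_subset by blast
  have km: "k \<le> m" using k m FG finG card_mono by blast
  have FA: "F \<subseteq> A" using FG GA by blast
  have eq: "{\<sigma> \<in> permutations_of_set A. set (take k \<sigma>) = F \<and> set (take m \<sigma>) = G}
     = {\<sigma> \<in> permutations_of_set A. set (take k \<sigma>) = F \<and> True \<and> set (take (m - k) (drop k \<sigma>)) = G - F}"
  proof (intro Collect_cong conj_cong refl)
    fix \<sigma> assume s: "\<sigma> \<in> permutations_of_set A" and tk: "set (take k \<sigma>) = F"
    have d: "set (take k \<sigma>) \<inter> set (drop k \<sigma>) = {}"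
      using s by (metis append_take_drop_id distinct_append permutations_of_setD(2))
    have tm: "take m \<sigma> = take k \<sigma> @ take (m - k) (drop k \<sigma>)" using km by (metis le_add_diff_inverse take_add)
    have sub: "set (take (m - k) (drop k \<sigma>)) \<subseteq> set (drop k \<sigma>)" by (rule set_take_subset)
    show "(set (take m \<sigma>) = G) = (True \<and> set (take (m - k) (drop k \<sigma>)) = G - F)"
      using tm tk d sub FG by auto
  qed
  have "card {\<sigma> \<in> permutations_of_set A. set (take k \<sigma>) = F \<and> True \<and> set (take (m - k) (drop k \<sigma>)) = G - F}
     = card {\<alpha> \<in> permutations_of_set F. True} * card {\<beta> \<in> permutations_of_set (A - F). set (take (m - k) \<beta>) = G - F}"
    by (rule perm_split_card[OF fin FA k])
  also have "card {\<alpha> \<in> permutations_of_set F. True} = fact k" using k fin FA finite_subset by fastforce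
  also have "card {\<beta> \<in> permutations_of_set (A - F). set (take (m - k) \<beta>) = G - F}
      = fact (m - k) * fact (card (A - F) - (m - k))"
    by (rule chain_card) (use fin FG GA m k finG in \<open>auto simp: card_Diff_subset finite_subset\<close>)
  also have "card (A - F) - (m - k) = card A - m"
    using k FA fin km m GA card_mono[OF fin GA] by (simp add: card_Diff_subset finite_subset)
  finally show ?thesis using eq by (simp add: mult.assoc)
qed

lemma pos_up_card:
  assumes fin: "finite A" and FA: "F \<subseteq> A" and k: "card F = k" and b: "b \<in> A - F"
    and p1: "k \<le> p" and p2: "p < card A"
  shows "card {\<sigma> \<in> permutations_of_set A. set (take k \<sigma>) = F \<and> \<sigma> ! p = b}
       = fact k * fact (card A - k - 1)"
proof -
  have cAF: "card (A - F) = card A - k" using k FA fin by (simp add: card_Diff_subset finite_subset)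
  have eq: "{\<sigma> \<in> permutations_of_set A. set (take k \<sigma>) = F \<and> \<sigma> ! p = b}
     = {\<sigma> \<in> permutations_of_set A. set (take k \<sigma>) = F \<and> True \<and> (drop k \<sigma>) ! (p - k) = b}"
  proof (intro Collect_cong conj_cong refl)
    fix \<sigma> assume s: "\<sigma> \<in> permutations_of_set A"
    then have "length \<sigma> = card A" by (rule length_finite_permutations_of_set)
    then show "(\<sigma> ! p = b) = (True \<and> drop k \<sigma> ! (p - k) = b)" using p1 p2 by simp
  qed
  have "card {\<sigma> \<in> permutations_of_set A. set (take k \<sigma>) = F \<and> True \<and> (drop k \<sigma>) ! (p - k) = b}
     = card {\<alpha> \<in> permutations_of_set F. True} * card {\<beta> \<in> permutations_of_set (A - F). \<beta> ! (p - k) = b}"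
    by (rule perm_split_card[OF fin FA k])
  also have "card {\<alpha> \<in> permutations_of_set F. True} = fact k" using k fin FA finite_subset by fastforce
  also have "card {\<beta> \<in> permutations_of_set (A - F). \<beta> ! (p - k) = b} = fact (card (A - F) - 1)"
    by (rule perm_pos_card) (use fin b p1 p2 cAF in auto)
  finally show ?thesis using eq cAF by simp
qed

lemma pos_down_card:
  assumes fin: "finite A" and FA: "F \<subseteq> A" and k: "card F = k" and b: "b \<in> F"
    and p: "p < k"
  shows "card {\<sigma> \<in> permutations_of_set A. set (take k \<sigma>) = F \<and> \<sigma> ! p = b}
       = fact (k - 1) * fact (card A - k)"
proof -
  have cAF: "card (A - F) = card A - k" using k FA fin by (simp add: card_Diff_subset finite_subset)
  have finF: "finite F" using fin FA finite_subset by blast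
  have eq: "{\<sigma> \<in> permutations_of_set A. set (take k \<sigma>) = F \<and> \<sigma> ! p = b}
     = {\<sigma> \<in> permutations_of_set A. set (take k \<sigma>) = F \<and> (take k \<sigma>) ! p = b \<and> True}"
    using p by auto
  have "card {\<sigma> \<in> permutations_of_set A. set (take k \<sigma>) = F \<and> (take k \<sigma>) ! p = b \<and> True}
     = card {\<alpha> \<in> permutations_of_set F. \<alpha> ! p = b} * card {\<beta> \<in> permutations_of_set (A - F). True}"
    by (rule perm_split_card[OF fin FA k])
  also have "card {\<beta> \<in> permutations_of_set (A - F). True} = fact (card A - k)" using cAF fin by simp
  also have "card {\<alpha> \<in> permutations_of_set F. \<alpha> ! p = b} = fact (card F - 1)"
    by (rule perm_pos_card) (use finF b p k in auto)
  finally show ?thesis using eq k by simp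
qed

definition Ls :: "nat \<Rightarrow> nat set set \<Rightarrow> nat list \<Rightarrow> nat list" where
  "Ls n Fam \<sigma> = sorted_list_of_set {k. k \<le> n \<and> set (take k \<sigma>) \<in> Fam}"

definition Win :: "nat \<Rightarrow> nat set set \<Rightarrow> nat \<Rightarrow> (nat list \<times> nat) set" where
  "Win n Fam q = {(\<sigma>, s). \<sigma> \<in> permutations_of_set {1..n} \<and> s + q \<le> length (Ls n Fam \<sigma>)}"

definition vert :: "nat \<Rightarrow> nat set set \<Rightarrow> nat \<Rightarrow> nat list \<times> nat \<Rightarrow> nat \<Rightarrow> nat set" where
  "vert n Fam q x i = set (take (Ls n Fam (fst x) ! (snd x + q - i)) (fst x))"

lemma Ls_props:
  shows "sorted_wrt (<) (Ls n Fam \<sigma>)" "set (Ls n Fam \<sigma>) = {k. k \<le> n \<and> set (take k \<sigma>) \<in> Fam}"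
    "length (Ls n Fam \<sigma>) = card {k. k \<le> n \<and> set (take k \<sigma>) \<in> Fam}"
  unfolding Ls_def by auto

lemma perm_len: "\<sigma> \<in> permutations_of_set {1..n} \<Longrightarrow> length \<sigma> = n"
  using length_finite_permutations_of_set by fastforce

lemma card_take_perm:
  assumes "\<sigma> \<in> permutations_of_set {1..n}" "k \<le> n"
  shows "card (set (take k \<sigma>)) = k"
proof -
  have "distinct \<sigma>" using assms by (simp add: permutations_of_set_def)
  then have "distinct (take k \<sigma>)" by simp
  then show ?thesis using assms perm_len by (simp add: distinct_card)
qed

lemma Ls_nth:
  assumes "a < length (Ls n Fam \<sigma>)"
  shows "Ls n Fam \<sigma> ! a \<le> n" "set (take (Ls n Fam \<sigma> ! a) \<sigma>) \<in> Fam"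
  using nth_mem[OF assms] Ls_props(2)[of n Fam \<sigma>] by auto

lemma Ls_less:
  assumes "a < b" "b < length (Ls n Fam \<sigma>)"
  shows "Ls n Fam \<sigma> ! a < Ls n Fam \<sigma> ! b"
  using sorted_wrt_nth_less[OF Ls_props(1) assms] .

lemma Ls_gap:
  assumes gp: "gapped l Fam" and s: "\<sigma> \<in> permutations_of_set {1..n}"
    and ab: "a \<le> b" "b < length (Ls n Fam \<sigma>)"
  shows "Ls n Fam \<sigma> ! b \<ge> Ls n Fam \<sigma> ! a + l * (b - a)"
  using ab
proof (induction b)
  case 0 then show ?case by simp
next
  case (Suc b)
  show ?case
  proof (cases "a = Suc b")
    case True then show ?thesis by simp
  next
    case False
    then have ab': "a \<le> b" using Suc by simp
    have IH: "Ls n Fam \<sigma> ! b \<ge> Ls n Fam \<sigma> ! a + l * (b - a)" using Suc ab' by simp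
    let ?L = "Ls n Fam \<sigma>"
    have lt: "?L ! b < ?L ! Suc b" using Ls_less[of b "Suc b"] Suc by simp
    have inF: "set (take (?L ! b) \<sigma>) \<in> Fam" "set (take (?L ! Suc b) \<sigma>) \<in> Fam"
      "?L ! b \<le> n" "?L ! Suc b \<le> n" using Ls_nth[of b n Fam \<sigma>] Ls_nth[of "Suc b" n Fam \<sigma>] Suc by auto
    have sub: "set (take (?L ! b) \<sigma>) \<subseteq> set (take (?L ! Suc b) \<sigma>)"
      using lt by (simp add: set_take_subset_set_take)
    have c1: "card (set (take (?L ! b) \<sigma>)) = ?L ! b" using card_take_perm[OF s inF(3)] .
    have c2: "card (set (take (?L ! Suc b) \<sigma>)) = ?L ! Suc b" using card_take_perm[OF s inF(4)] .
    have psub: "set (take (?L ! b) \<sigma>) \<subset> set (take (?L ! Suc b) \<sigma>)" using sub c1 c2 lt by auto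
    have "card (set (take (?L ! Suc b) \<sigma>) - set (take (?L ! b) \<sigma>)) \<ge> l"
      using gp inF psub unfolding gapped_def by blast
    moreover have "card (set (take (?L ! Suc b) \<sigma>) - set (take (?L ! b) \<sigma>)) = ?L ! Suc b - ?L ! b"
      using c1 c2 sub by (simp add: card_Diff_subset)
    ultimately have "?L ! Suc b \<ge> ?L ! b + l" using lt by linarith
    moreover have "l * (Suc b - a) = l * (b - a) + l" using ab' by (simp add: Suc_diff_le)
    ultimately show ?thesis using IH by simp
  qed
qed

lemma vert_props:
  assumes x: "x \<in> Win n Fam q" and i: "i \<in> {1..q}"
  shows "vert n Fam q x i \<in> Fam" "card (vert n Fam q x i) = Ls n Fam (fst x) ! (snd x + q - i)"
    "snd x + q - i < length (Ls n Fam (fst x))"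
proof -
  obtain \<sigma> s where xs: "x = (\<sigma>, s)" by (cases x)
  have s: "\<sigma> \<in> permutations_of_set {1..n}" "s + q \<le> length (Ls n Fam \<sigma>)" using x xs by (auto simp: Win_def)
  have idx: "s + q - i < length (Ls n Fam \<sigma>)" using s i by auto
  then show "snd x + q - i < length (Ls n Fam (fst x))" using xs by simp
  show "vert n Fam q x i \<in> Fam" using Ls_nth(2)[OF idx] xs by (simp add: vert_def)
  show "card (vert n Fam q x i) = Ls n Fam (fst x) ! (snd x + q - i)"
    using card_take_perm[OF s(1) Ls_nth(1)[OF idx]] xs by (simp add: vert_def)
qed

lemma vert_sub:
  assumes x: "x \<in> Win n Fam q" and i: "i \<in> {1..q}" and j: "j \<in> {1..q}" and ji: "j < i"
    and gp: "gapped l Fam"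
  shows "vert n Fam q x i \<subset> vert n Fam q x j"
    "card (vert n Fam q x j) \<ge> card (vert n Fam q x i) + l * (i - j)"
proof -
  obtain \<sigma> s where xs: "x = (\<sigma>, s)" by (cases x)
  have s: "\<sigma> \<in> permutations_of_set {1..n}" "s + q \<le> length (Ls n Fam \<sigma>)" using x xs by (auto simp: Win_def)
  have ab: "s + q - i < s + q - j" "s + q - j < length (Ls n Fam \<sigma>)" using i j ji s by auto
  have lt: "Ls n Fam \<sigma> ! (s + q - i) < Ls n Fam \<sigma> ! (s + q - j)" by (rule Ls_less[OF ab])
  have ci: "card (vert n Fam q x i) = Ls n Fam \<sigma> ! (s + q - i)" using vert_props[OF x i] xs by simp
  have cj: "card (vert n Fam q x j) = Ls n Fam \<sigma> ! (s + q - j)" using vert_props[OF x j] xs by simp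
  have "vert n Fam q x i \<subseteq> vert n Fam q x j" using lt xs by (simp add: vert_def set_take_subset_set_take)
  then show "vert n Fam q x i \<subset> vert n Fam q x j" using ci cj lt by auto
  have "Ls n Fam \<sigma> ! (s + q - j) \<ge> Ls n Fam \<sigma> ! (s + q - i) + l * ((s + q - j) - (s + q - i))"
    by (rule Ls_gap[OF gp s(1)]) (use ab in auto)
  moreover have "(s + q - j) - (s + q - i) = i - j" using i j ji by auto
  ultimately show "card (vert n Fam q x j) \<ge> card (vert n Fam q x i) + l * (i - j)" using ci cj by simp
qed

lemma vert_inj:
  assumes x: "x \<in> Win n Fam q" and y: "y \<in> Win n Fam q" and i: "i \<in> {1..q}"
    and f: "fst x = fst y" and v: "vert n Fam q x i = vert n Fam q y i"
  shows "x = y"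
proof -
  obtain \<sigma> s t where xs: "x = (\<sigma>, s)" "y = (\<sigma>, t)" using f by (cases x, cases y) auto
  have "Ls n Fam \<sigma> ! (s + q - i) = Ls n Fam \<sigma> ! (t + q - i)"
    using vert_props(2)[OF x i] vert_props(2)[OF y i] v xs by simp
  moreover have "s + q - i < length (Ls n Fam \<sigma>)" "t + q - i < length (Ls n Fam \<sigma>)"
    using vert_props(3)[OF x i] vert_props(3)[OF y i] xs by auto
  moreover have "distinct (Ls n Fam \<sigma>)" using Ls_props(1) strict_sorted_iff by blast
  ultimately have "s + q - i = t + q - i" using nth_eq_iff_index_eq by blast
  then have "s = t" using i by auto
  then show ?thesis using xs by simp
qed


lemma vert_take:
  assumes x: "x \<in> Win n Fam q" and i: "i \<in> {1..q}"
  shows "set (take (card (vert n Fam q x i)) (fst x)) = vert n Fam q x i"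
    "fst x \<in> permutations_of_set {1..n}"
  using vert_props(2)[OF x i] x by (auto simp: vert_def Win_def)

lemma binom_ge_a:
  assumes "a \<le> t" "t + a \<le> N"
  shows "N choose a \<le> N choose t"
proof (cases "2 * t \<le> N")
  case True then show ?thesis using assms binomial_mono by blast
next
  case False
  have "N choose a \<le> N choose (N - t)" using assms False by (intro binomial_mono) auto
  also have "\<dots> = N choose t" using False assms by (intro binomial_symmetric[symmetric]) auto
  finally show ?thesis .
qed

lemma fact_split_bound:
  assumes "a \<le> t" "t + a \<le> N"
  shows "real (fact k * fact t * fact (N - t)) * real (N choose a) \<le> real (fact k * fact N)"
proof -
  have "t \<le> N" using assms by simp
  then have e: "fact t * fact (N - t) * (N choose t) = fact N" by (rule binomial_fact_lemma)
  have "real (N choose a) \<le> real (N choose t)" using binom_ge_a[OF assms] by simp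
  then have "real (fact k * fact t * fact (N - t)) * real (N choose a)
      \<le> real (fact k * fact t * fact (N - t)) * real (N choose t)" by (intro mult_left_mono) auto
  also have "\<dots> = real (fact k) * real (fact t * fact (N - t) * (N choose t))" by simp
  also have "\<dots> = real (fact k * fact N)" using e by simp
  finally show ?thesis .
qed

lemma nth_in_take: "p < k \<Longrightarrow> p < length \<sigma> \<Longrightarrow> \<sigma> ! p \<in> set (take k \<sigma>)"
  by (metis in_set_conv_nth length_take min_less_iff_conj nth_take)

lemma nth_notin_take:
  assumes d: "distinct \<sigma>" and kp: "k \<le> p" and p: "p < length \<sigma>"
  shows "\<sigma> ! p \<notin> set (take k \<sigma>)"
proof
  assume "\<sigma> ! p \<in> set (take k \<sigma>)"
  then obtain p' where p': "p' < length (take k \<sigma>)" "take k \<sigma> ! p' = \<sigma> ! p"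
    by (auto simp: in_set_conv_nth)
  have "p' < k" "p' < length \<sigma>" using p' by auto
  moreover have "\<sigma> ! p' = \<sigma> ! p" using p' by simp
  ultimately have "p' = p" using d p nth_eq_iff_index_eq by blast
  then show False using \<open>p' < k\<close> kp by simp
qed

lemma in_take_pos: "b \<in> set (take m \<sigma>) \<Longrightarrow> \<exists>p<m. p < length \<sigma> \<and> \<sigma> ! p = b"
  by (metis in_set_conv_nth length_take min_less_iff_conj nth_take)


lemma finite_Win: "finite (Win n Fam q)"
proof -
  have "Win n Fam q \<subseteq> permutations_of_set {1..n} \<times> {..Suc n}"
  proof
    fix x assume x: "x \<in> Win n Fam q"
    then obtain \<sigma> s where xs: "x = (\<sigma>, s)" "\<sigma> \<in> permutations_of_set {1..n}" "s + q \<le> length (Ls n Fam \<sigma>)"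
      by (auto simp: Win_def)
    have "length (Ls n Fam \<sigma>) = card {k. k \<le> n \<and> set (take k \<sigma>) \<in> Fam}" by (rule Ls_props(3))
    also have "\<dots> \<le> card {..n}" by (intro card_mono) auto
    finally show "x \<in> permutations_of_set {1..n} \<times> {..Suc n}" using xs by auto
  qed
  moreover have "finite (permutations_of_set {1..n} \<times> {..Suc n})" by simp
  ultimately show ?thesis by (rule finite_subset)
qed

lemma step_up:
  fixes n k T a h :: nat and F' :: "nat set" and Hs :: "nat set set"
  assumes FamS: "\<forall>F\<in>Fam. F \<subseteq> {1..n}" and gp: "gapped l Fam"
    and i: "i \<in> {1..q}" and j: "j \<in> {1..q}" and ji: "j < i" and a: "a = l * (i - j)"
    and F'n: "F' \<subseteq> {1..n}" and k: "card F' = k" and kT: "k + T \<le> n" and T1: "1 \<le> T" and aT: "a + T \<le> n - k"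
    and Tb: "\<forall>x\<in>Win n Fam q. vert n Fam q x i = F' \<longrightarrow> card (vert n Fam q x j) \<le> k + T"
    and finH: "finite Hs" and hH: "card Hs \<le> h"
    and Hprop: "\<forall>H\<in>Hs. H \<subseteq> {1..n} \<and> \<not> H \<subseteq> F' \<and> (F' \<subseteq> H \<longrightarrow> card H \<le> k + T)"
  shows "real (card {G. \<exists>x\<in>{x\<in>Win n Fam q. P x \<and> vert n Fam q x i = F'}. vert n Fam q x j = G \<and>
                  (\<forall>H\<in>Hs. \<not> G \<subseteq> H \<and> \<not> H \<subseteq> G)}) * real (fact k * fact (n - k))
     \<ge> (real (card {x\<in>Win n Fam q. P x \<and> vert n Fam q x i = F'}) - 2 * h * T * real (fact k * fact (n - k - 1)))
        * real ((n - k) choose a)"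
proof -
  let ?v = "vert n Fam q"
  define D where "D = {x\<in>Win n Fam q. P x \<and> ?v x i = F'}"
  define B where "B = {x\<in>D. \<exists>H\<in>Hs. ?v x j \<subseteq> H \<or> H \<subseteq> ?v x j}"
  define Good where "Good = D - B"
  define N where "N = {G. \<exists>x\<in>D. ?v x j = G \<and> (\<forall>H\<in>Hs. \<not> G \<subseteq> H \<and> \<not> H \<subseteq> G)}"
  define PS where "PS = permutations_of_set {1..n}"
  define c :: nat where "c = fact k * fact (n - k - 1)"
  define M :: nat where "M = fact k * fact (n - k)"
  have finW: "finite (Win n Fam q)" by (rule finite_Win)
  have finD: "finite D" using finW by (simp add: D_def)
  have DW: "\<And>x. x \<in> D \<Longrightarrow> x \<in> Win n Fam q \<and> ?v x i = F'" by (simp add: D_def)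
  have injD: "inj_on fst D"
    by (rule inj_onI) (use DW vert_inj[OF _ _ i] in metis)
  have Dprops: "fst x \<in> PS \<and> set (take k (fst x)) = F' \<and> F' \<subset> ?v x j \<and>
       card (?v x j) \<ge> k + a \<and> card (?v x j) \<le> k + T \<and> set (take (card (?v x j)) (fst x)) = ?v x j
       \<and> distinct (fst x) \<and> length (fst x) = n \<and> ?v x j \<subseteq> {1..n}"
    if x: "x \<in> D" for x
  proof -
    have xw: "x \<in> Win n Fam q" and vi: "?v x i = F'" using DW[OF x] by auto
    have ps: "fst x \<in> PS" using vert_take(2)[OF xw i] by (simp add: PS_def)
    have "set (take k (fst x)) = F'" using vert_take(1)[OF xw i] vi k by simp
    moreover have "F' \<subset> ?v x j" using vert_sub(1)[OF xw i j ji gp] vi by simp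
    moreover have "card (?v x j) \<ge> k + a" using vert_sub(2)[OF xw i j ji gp] vi k a by simp
    moreover have "card (?v x j) \<le> k + T" using Tb xw vi by blast
    moreover have "set (take (card (?v x j)) (fst x)) = ?v x j" by (rule vert_take(1)[OF xw j])
    moreover have "distinct (fst x)" "length (fst x) = n" using ps perm_len by (auto simp: PS_def permutations_of_set_def)
    moreover have "?v x j \<subseteq> {1..n}" using vert_props(1)[OF xw j] FamS by blast
    ultimately show ?thesis using ps by blast
  qed
  define bH where "bH = (\<lambda>H. SOME b. b \<in> H - F')"
  have bH: "bH H \<in> H - F'" if "H \<in> Hs" for H
    using Hprop that unfolding bH_def by (metis (no_types, lifting) Diff_iff someI_ex subsetI)
  define E1 where "E1 = (\<lambda>H. if F' \<subseteq> H then {\<sigma>\<in>PS. set (take k \<sigma>) = F' \<and> \<sigma> ! k \<in> H - F'} else {})"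
  define E2 where "E2 = (\<lambda>H p. {\<sigma>\<in>PS. set (take k \<sigma>) = F' \<and> \<sigma> ! p = bH H})"
  have kn: "k < n" using kT T1 by simp
  have fB: "fst ` B \<subseteq> (\<Union>H\<in>Hs. E1 H \<union> (\<Union>p\<in>{k..<k+T}. E2 H p))"
  proof
    fix \<sigma> assume "\<sigma> \<in> fst ` B"
    then obtain x H where x: "x \<in> D" "\<sigma> = fst x" and H: "H \<in> Hs" "?v x j \<subseteq> H \<or> H \<subseteq> ?v x j"
      by (auto simp: B_def)
    note dp = Dprops[OF x(1)]
    let ?G = "?v x j"
    show "\<sigma> \<in> (\<Union>H\<in>Hs. E1 H \<union> (\<Union>p\<in>{k..<k+T}. E2 H p))"
    proof (cases "?G \<subseteq> H")
      case True
      have FH: "F' \<subseteq> H" using True dp by blast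
      have finG: "finite ?G" using dp finite_subset by blast
      have "card F' < card ?G" using psubset_card_mono[OF finG] dp by blast
      then have kG: "k < card ?G" using k by simp
      have "k < length \<sigma>" using dp x(2) kn by simp
      then have "\<sigma> ! k \<in> set (take (card ?G) \<sigma>)" using nth_in_take[OF kG] by blast
      then have "\<sigma> ! k \<in> ?G" using dp x(2) by simp
      moreover have "\<sigma> ! k \<notin> F'" using dp x(2) nth_notin_take[of \<sigma> k k] kn by auto
      ultimately have "\<sigma> \<in> E1 H" using True FH dp x(2) by (auto simp: E1_def)
      then show ?thesis using H by blast
    next
      case False
      then have HG: "H \<subseteq> ?G" using H by blast
      have b: "bH H \<in> ?G" "bH H \<notin> F'" using bH[OF H(1)] HG by auto
      obtain p where p: "p < card ?G" "p < length \<sigma>" "\<sigma> ! p = bH H"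
        using in_take_pos[of "bH H" "card ?G" \<sigma>] b dp x(2) by auto
      have "k \<le> p"
      proof (rule ccontr)
        assume "\<not> k \<le> p"
        then have "p < k" by simp
        then have "\<sigma> ! p \<in> set (take k \<sigma>)" using nth_in_take[of p k \<sigma>] p(2) by blast
        then show False using b p dp x(2) by simp
      qed
      then have "\<sigma> \<in> E2 H p" "p \<in> {k..<k+T}" using p dp x(2) by (auto simp: E2_def)
      then show ?thesis using H by blast
    qed
  qed
  have cE1: "card (E1 H) \<le> T * c" if H: "H \<in> Hs" for H
  proof (cases "F' \<subseteq> H")
    case True
    have E1eq: "E1 H = (\<Union>b\<in>H - F'. {\<sigma>\<in>PS. set (take k \<sigma>) = F' \<and> \<sigma> ! k = b})"
      using True by (auto simp: E1_def)
    then have "card (E1 H) \<le> (\<Sum>b\<in>H - F'. card {\<sigma>\<in>PS. set (take k \<sigma>) = F' \<and> \<sigma> ! k = b})"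
    proof -
      have "finite (H - F')" using Hprop H finite_subset by blast
      then show ?thesis unfolding E1eq by (rule card_UN_le)
    qed
    also have "\<dots> = (\<Sum>b\<in>H - F'. c)"
    proof (intro sum.cong refl)
      fix b assume "b \<in> H - F'"
      then have "b \<in> {1..n} - F'" using Hprop H by blast
      then show "card {\<sigma>\<in>PS. set (take k \<sigma>) = F' \<and> \<sigma> ! k = b} = c"
        using pos_up_card[of "{1..n}" F' k b k] F'n k kn by (simp add: PS_def c_def)
    qed
    also have "\<dots> = card (H - F') * c" by simp
    also have "card (H - F') = card H - k"
    proof -
      have "finite H" using Hprop H finite_subset by blast
      then have "finite F'" using True finite_subset by blast
      then show ?thesis using card_Diff_subset[OF _ True] k by simp
    qed
    also have "(card H - k) * c \<le> T * c"
    proof -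
      have "card H \<le> k + T" using Hprop H True by blast
      then show ?thesis by (intro mult_right_mono) auto
    qed
    finally show ?thesis .
  qed (simp add: E1_def)
  have cE2: "card (E2 H p) = c" if H: "H \<in> Hs" and p: "p \<in> {k..<k+T}" for H p
  proof -
    have "bH H \<in> {1..n} - F'" using bH[OF H] Hprop H by blast
    then show ?thesis using pos_up_card[of "{1..n}" F' k "bH H" p] F'n k p kT
      by (simp add: E2_def PS_def c_def)
  qed
  have cEH: "card (E1 H \<union> (\<Union>p\<in>{k..<k+T}. E2 H p)) \<le> 2 * T * c" if H: "H \<in> Hs" for H
  proof -
    have "card (\<Union>p\<in>{k..<k+T}. E2 H p) \<le> (\<Sum>p\<in>{k..<k+T}. card (E2 H p))" by (rule card_UN_le) simp
    also have "\<dots> = T * c" using cE2[OF H] by simp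
    finally have "card (\<Union>p\<in>{k..<k+T}. E2 H p) \<le> T * c" .
    then show ?thesis using cE1[OF H] card_Un_le[of "E1 H" "\<Union>p\<in>{k..<k+T}. E2 H p"] by simp
  qed
  have cB: "card B \<le> h * (2 * T * c)"
  proof -
    have "card B = card (fst ` B)" using injD by (intro card_image[symmetric]) (auto simp: B_def intro: inj_on_subset)
    also have "\<dots> \<le> card (\<Union>H\<in>Hs. E1 H \<union> (\<Union>p\<in>{k..<k+T}. E2 H p))"
      by (rule card_mono[OF _ fB]) (simp add: finH E1_def E2_def PS_def)
    also have "\<dots> \<le> (\<Sum>H\<in>Hs. card (E1 H \<union> (\<Union>p\<in>{k..<k+T}. E2 H p)))" by (rule card_UN_le[OF finH])
    also have "\<dots> \<le> (\<Sum>H\<in>Hs. 2 * T * c)" by (rule sum_mono) (rule cEH)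
    also have "\<dots> = card Hs * (2 * T * c)" by simp
    also have "\<dots> \<le> h * (2 * T * c)" using hH by simp
    finally show ?thesis .
  qed
  have cGood: "real (card Good) \<ge> real (card D) - real (card B)"
    unfolding Good_def using card_Diff_subset[of B D] finD by (simp add: B_def finite_subset)
  have GoodN: "Good = (\<Union>G\<in>N. {x\<in>Good. ?v x j = G})"
    unfolding Good_def N_def B_def by blast
  have finN: "finite N"
  proof -
    have "N \<subseteq> (\<lambda>x. ?v x j) ` D" unfolding N_def by blast
    then show ?thesis using finD finite_surj by blast
  qed
  have perG: "real (card {x\<in>Good. ?v x j = G}) * real ((n - k) choose a) \<le> real M" if G: "G \<in> N" for G
  proof -
    obtain x0 where x0: "x0 \<in> D" "?v x0 j = G" using G by (auto simp: N_def)
    note d0 = Dprops[OF x0(1)]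
    define g where "g = card G"
    have FG: "F' \<subseteq> G" and Gn: "G \<subseteq> {1..n}" using d0 x0 by auto
    have "fst ` {x\<in>Good. ?v x j = G} \<subseteq> {\<sigma>\<in>PS. set (take k \<sigma>) = F' \<and> set (take g \<sigma>) = G}"
      using Dprops unfolding Good_def g_def by force
    moreover have "inj_on fst {x\<in>Good. ?v x j = G}" using injD by (rule inj_on_subset) (auto simp: Good_def)
    ultimately have "card {x\<in>Good. ?v x j = G} \<le> card {\<sigma>\<in>PS. set (take k \<sigma>) = F' \<and> set (take g \<sigma>) = G}"
      by (metis (no_types, lifting) card_image card_mono finite_permutations_of_set finite_subset mem_Collect_eq subsetI PS_def)
    also have "\<dots> = fact k * fact (g - k) * fact (n - g)"
      using chain2_card[of "{1..n}" F' G k g] FG Gn k by (simp add: PS_def g_def)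
    finally have c1: "real (card {x\<in>Good. ?v x j = G}) \<le> real (fact k * fact (g - k) * fact (n - g))" by linarith
    have ga: "a \<le> g - k" "(g - k) + a \<le> n - k" using d0 x0 aT by (auto simp: g_def)
    have "real (fact k * fact (g - k) * fact ((n - k) - (g - k))) * real ((n - k) choose a) \<le> real (fact k * fact (n - k))"
      by (rule fact_split_bound[OF ga])
    moreover have "(n - k) - (g - k) = n - g"
    proof -
      have "k \<le> g" using card_mono[OF _ FG] Gn k finite_subset unfolding g_def by blast
      then show ?thesis by simp
    qed
    ultimately have "real (fact k * fact (g - k) * fact (n - g)) * real ((n - k) choose a) \<le> real M"
      by (simp add: M_def)
    then show ?thesis using c1 by (meson mult_right_mono of_nat_0_le_iff order_trans)
  qed
  have "real (card Good) * real ((n - k) choose a) \<le> real (\<Sum>G\<in>N. card {x\<in>Good. ?v x j = G}) * real ((n - k) choose a)"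
  proof -
    have "card Good \<le> (\<Sum>G\<in>N. card {x\<in>Good. ?v x j = G})"
      by (subst GoodN) (rule card_UN_le[OF finN])
    then have "real (card Good) \<le> real (\<Sum>G\<in>N. card {x\<in>Good. ?v x j = G})" by (simp only: of_nat_le_iff)
    then show ?thesis by (intro mult_right_mono) auto
  qed
  also have "\<dots> = (\<Sum>G\<in>N. real (card {x\<in>Good. ?v x j = G}) * real ((n - k) choose a))"
    by (simp add: sum_distrib_right)
  also have "\<dots> \<le> (\<Sum>G\<in>N. real M)" by (rule sum_mono) (rule perG)
  also have "\<dots> = real (card N) * real M" by simp
  finally have main: "real (card Good) * real ((n - k) choose a) \<le> real (card N) * real M" .
  have "real (card D) - 2 * h * T * real c \<le> real (card Good)"
    using cGood cB by (simp add: of_nat_mult[symmetric] del: of_nat_mult)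
  then have "(real (card D) - 2 * h * T * real c) * real ((n - k) choose a) \<le> real (card Good) * real ((n - k) choose a)"
    by (intro mult_right_mono) auto
  with main show ?thesis by (simp add: D_def N_def M_def c_def)
qed

lemma step_down:
  fixes n k T a h :: nat and F' :: "nat set" and Hs :: "nat set set"
  assumes FamS: "\<forall>F\<in>Fam. F \<subseteq> {1..n}" and gp: "gapped l Fam"
    and i: "i \<in> {1..q}" and j: "j \<in> {1..q}" and ji: "i < j" and a: "a = l * (j - i)"
    and F'n: "F' \<subseteq> {1..n}" and k: "card F' = k" and T1: "1 \<le> T" and aT: "a + T \<le> k"
    and Tb: "\<forall>x\<in>Win n Fam q. vert n Fam q x i = F' \<longrightarrow> k \<le> card (vert n Fam q x j) + T"
    and finH: "finite Hs" and hH: "card Hs \<le> h"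
    and Hprop: "\<forall>H\<in>Hs. H \<subseteq> {1..n} \<and> \<not> F' \<subseteq> H \<and> (H \<subseteq> F' \<longrightarrow> k \<le> card H + T)"
  shows "real (card {G. \<exists>x\<in>{x\<in>Win n Fam q. P x \<and> vert n Fam q x i = F'}. vert n Fam q x j = G \<and>
                  (\<forall>H\<in>Hs. \<not> G \<subseteq> H \<and> \<not> H \<subseteq> G)}) * real (fact k * fact (n - k))
     \<ge> (real (card {x\<in>Win n Fam q. P x \<and> vert n Fam q x i = F'}) - 2 * h * T * real (fact (k - 1) * fact (n - k)))
        * real (k choose a)"
proof -
  let ?v = "vert n Fam q"
  define D where "D = {x\<in>Win n Fam q. P x \<and> ?v x i = F'}"
  define B where "B = {x\<in>D. \<exists>H\<in>Hs. ?v x j \<subseteq> H \<or> H \<subseteq> ?v x j}"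
  define Good where "Good = D - B"
  define N where "N = {G. \<exists>x\<in>D. ?v x j = G \<and> (\<forall>H\<in>Hs. \<not> G \<subseteq> H \<and> \<not> H \<subseteq> G)}"
  define PS where "PS = permutations_of_set {1..n}"
  define c :: nat where "c = fact (k - 1) * fact (n - k)"
  define M :: nat where "M = fact k * fact (n - k)"
  have finW: "finite (Win n Fam q)" by (rule finite_Win)
  have finD: "finite D" using finW by (simp add: D_def)
  have DW: "\<And>x. x \<in> D \<Longrightarrow> x \<in> Win n Fam q \<and> ?v x i = F'" by (simp add: D_def)
  have injD: "inj_on fst D"
    by (rule inj_onI) (use DW vert_inj[OF _ _ i] in metis)
  have kn: "k \<le> n" using F'n k card_mono[OF _ F'n] by fastforce
  have Dprops: "fst x \<in> PS \<and> set (take k (fst x)) = F' \<and> ?v x j \<subset> F' \<and>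
       card (?v x j) + a \<le> k \<and> k \<le> card (?v x j) + T \<and> set (take (card (?v x j)) (fst x)) = ?v x j
       \<and> distinct (fst x) \<and> length (fst x) = n \<and> ?v x j \<subseteq> {1..n}"
    if x: "x \<in> D" for x
  proof -
    have xw: "x \<in> Win n Fam q" and vi: "?v x i = F'" using DW[OF x] by auto
    have ps: "fst x \<in> PS" using vert_take(2)[OF xw i] by (simp add: PS_def)
    have "set (take k (fst x)) = F'" using vert_take(1)[OF xw i] vi k by simp
    moreover have "?v x j \<subset> F'" using vert_sub(1)[OF xw j i ji gp] vi by simp
    moreover have "card (?v x j) + a \<le> k" using vert_sub(2)[OF xw j i ji gp] vi k a by simp
    moreover have "k \<le> card (?v x j) + T" using Tb xw vi by blast
    moreover have "set (take (card (?v x j)) (fst x)) = ?v x j" by (rule vert_take(1)[OF xw j])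
    moreover have "distinct (fst x)" "length (fst x) = n" using ps perm_len by (auto simp: PS_def permutations_of_set_def)
    moreover have "?v x j \<subseteq> {1..n}" using vert_props(1)[OF xw j] FamS by blast
    ultimately show ?thesis using ps by blast
  qed
  define bH where "bH = (\<lambda>H. SOME b. b \<in> F' - H)"
  have bH: "bH H \<in> F' - H" if "H \<in> Hs" for H
    using Hprop that unfolding bH_def by (metis (no_types, lifting) Diff_iff someI_ex subsetI)
  define E1 where "E1 = (\<lambda>H. if H \<subseteq> F' then {\<sigma>\<in>PS. set (take k \<sigma>) = F' \<and> \<sigma> ! (k - 1) \<in> F' - H} else {})"
  define E2 where "E2 = (\<lambda>H p. {\<sigma>\<in>PS. set (take k \<sigma>) = F' \<and> \<sigma> ! p = bH H})"
  have k1: "1 \<le> k" using aT T1 by simp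
  have fB: "fst ` B \<subseteq> (\<Union>H\<in>Hs. E1 H \<union> (\<Union>p\<in>{k-T..<k}. E2 H p))"
  proof
    fix \<sigma> assume "\<sigma> \<in> fst ` B"
    then obtain x H where x: "x \<in> D" "\<sigma> = fst x" and H: "H \<in> Hs" "?v x j \<subseteq> H \<or> H \<subseteq> ?v x j"
      by (auto simp: B_def)
    note dp = Dprops[OF x(1)]
    let ?G = "?v x j"
    have finF: "finite F'" using F'n finite_subset by blast
    show "\<sigma> \<in> (\<Union>H\<in>Hs. E1 H \<union> (\<Union>p\<in>{k-T..<k}. E2 H p))"
    proof (cases "H \<subseteq> ?G")
      case True
      have HF: "H \<subseteq> F'" using True dp by blast
      have "card ?G < card F'" using psubset_card_mono[OF finF] dp by blast
      then have gk: "card ?G \<le> k - 1" using k by simp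
      have kl: "k - 1 < length \<sigma>" using dp x(2) kn k1 by simp
      have "\<sigma> ! (k - 1) \<in> set (take k \<sigma>)" using nth_in_take[of "k - 1" k \<sigma>] kl k1 by simp
      then have inF: "\<sigma> ! (k - 1) \<in> F'" using dp x(2) by simp
      have "\<sigma> ! (k - 1) \<notin> set (take (card ?G) \<sigma>)" using nth_notin_take[of \<sigma> "card ?G" "k - 1"] dp x(2) gk kl by simp
      then have "\<sigma> ! (k - 1) \<notin> H" using dp x(2) True by auto
      then have "\<sigma> \<in> E1 H" using inF HF dp x(2) by (auto simp: E1_def)
      then show ?thesis using H by blast
    next
      case False
      then have GH: "?G \<subseteq> H" using H by blast
      have b: "bH H \<in> F'" "bH H \<notin> ?G" using bH[OF H(1)] GH by auto
      obtain p where p: "p < k" "p < length \<sigma>" "\<sigma> ! p = bH H"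
        using in_take_pos[of "bH H" k \<sigma>] b dp x(2) by auto
      have "card ?G \<le> p"
      proof (rule ccontr)
        assume "\<not> card ?G \<le> p"
        then have "p < card ?G" by simp
        then have "\<sigma> ! p \<in> set (take (card ?G) \<sigma>)" using nth_in_take[of p "card ?G" \<sigma>] p(2) by blast
        then show False using b p dp x(2) by simp
      qed
      then have "\<sigma> \<in> E2 H p" "p \<in> {k-T..<k}" using p dp x(2) by (auto simp: E2_def)
      then show ?thesis using H by blast
    qed
  qed
  have cE1: "card (E1 H) \<le> T * c" if H: "H \<in> Hs" for H
  proof (cases "H \<subseteq> F'")
    case True
    have E1eq: "E1 H = (\<Union>b\<in>F' - H. {\<sigma>\<in>PS. set (take k \<sigma>) = F' \<and> \<sigma> ! (k - 1) = b})"
      using True by (auto simp: E1_def)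
    have "card (E1 H) \<le> (\<Sum>b\<in>F' - H. card {\<sigma>\<in>PS. set (take k \<sigma>) = F' \<and> \<sigma> ! (k - 1) = b})"
    proof -
      have "finite (F' - H)" using F'n finite_subset by blast
      then show ?thesis unfolding E1eq by (rule card_UN_le)
    qed
    also have "\<dots> = (\<Sum>b\<in>F' - H. c)"
    proof (intro sum.cong refl)
      fix b assume "b \<in> F' - H"
      then have "b \<in> F'" by blast
      then show "card {\<sigma>\<in>PS. set (take k \<sigma>) = F' \<and> \<sigma> ! (k - 1) = b} = c"
        using pos_down_card[of "{1..n}" F' k b "k - 1"] F'n k k1 by (simp add: PS_def c_def)
    qed
    also have "\<dots> = card (F' - H) * c" by simp
    also have "card (F' - H) = k - card H"
    proof -
      have "finite F'" using F'n finite_subset by blast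
      then have "finite H" using True finite_subset by blast
      then show ?thesis using card_Diff_subset[OF _ True] k by simp
    qed
    also have "(k - card H) * c \<le> T * c"
    proof -
      have "k \<le> card H + T" using Hprop H True by blast
      then show ?thesis by (intro mult_right_mono) auto
    qed
    finally show ?thesis .
  qed (simp add: E1_def)
  have cE2: "card (E2 H p) = c" if H: "H \<in> Hs" and p: "p \<in> {k-T..<k}" for H p
  proof -
    have "bH H \<in> F'" using bH[OF H] by blast
    then show ?thesis using pos_down_card[of "{1..n}" F' k "bH H" p] F'n k p
      by (simp add: E2_def PS_def c_def)
  qed
  have cEH: "card (E1 H \<union> (\<Union>p\<in>{k-T..<k}. E2 H p)) \<le> 2 * T * c" if H: "H \<in> Hs" for H
  proof -
    have "card (\<Union>p\<in>{k-T..<k}. E2 H p) \<le> (\<Sum>p\<in>{k-T..<k}. card (E2 H p))" by (rule card_UN_le) simp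
    also have "\<dots> = T * c" using cE2[OF H] aT by simp
    finally have "card (\<Union>p\<in>{k-T..<k}. E2 H p) \<le> T * c" .
    then show ?thesis using cE1[OF H] card_Un_le[of "E1 H" "\<Union>p\<in>{k-T..<k}. E2 H p"] by simp
  qed
  have cB: "card B \<le> h * (2 * T * c)"
  proof -
    have "card B = card (fst ` B)" using injD by (intro card_image[symmetric]) (auto simp: B_def intro: inj_on_subset)
    also have "\<dots> \<le> card (\<Union>H\<in>Hs. E1 H \<union> (\<Union>p\<in>{k-T..<k}. E2 H p))"
      by (rule card_mono[OF _ fB]) (simp add: finH E1_def E2_def PS_def)
    also have "\<dots> \<le> (\<Sum>H\<in>Hs. card (E1 H \<union> (\<Union>p\<in>{k-T..<k}. E2 H p)))" by (rule card_UN_le[OF finH])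
    also have "\<dots> \<le> (\<Sum>H\<in>Hs. 2 * T * c)" by (rule sum_mono) (rule cEH)
    also have "\<dots> = card Hs * (2 * T * c)" by simp
    also have "\<dots> \<le> h * (2 * T * c)" using hH by simp
    finally show ?thesis .
  qed
  have cGood: "real (card Good) \<ge> real (card D) - real (card B)"
    unfolding Good_def using card_Diff_subset[of B D] finD by (simp add: B_def finite_subset)
  have GoodN: "Good = (\<Union>G\<in>N. {x\<in>Good. ?v x j = G})"
    unfolding Good_def N_def B_def by blast
  have finN: "finite N"
  proof -
    have "N \<subseteq> (\<lambda>x. ?v x j) ` D" unfolding N_def by blast
    then show ?thesis using finD finite_surj by blast
  qed
  have perG: "real (card {x\<in>Good. ?v x j = G}) * real (k choose a) \<le> real M" if G: "G \<in> N" for G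
  proof -
    obtain x0 where x0: "x0 \<in> D" "?v x0 j = G" using G by (auto simp: N_def)
    note d0 = Dprops[OF x0(1)]
    define g where "g = card G"
    have GF: "G \<subseteq> F'" using d0 x0 by auto
    have "fst ` {x\<in>Good. ?v x j = G} \<subseteq> {\<sigma>\<in>PS. set (take g \<sigma>) = G \<and> set (take k \<sigma>) = F'}"
      using Dprops unfolding Good_def g_def by force
    moreover have "inj_on fst {x\<in>Good. ?v x j = G}" using injD by (rule inj_on_subset) (auto simp: Good_def)
    ultimately have "card {x\<in>Good. ?v x j = G} \<le> card {\<sigma>\<in>PS. set (take g \<sigma>) = G \<and> set (take k \<sigma>) = F'}"
      by (metis (no_types, lifting) card_image card_mono finite_permutations_of_set finite_subset mem_Collect_eq subsetI PS_def)
    also have "\<dots> = fact g * fact (k - g) * fact (n - k)"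
      using chain2_card[of "{1..n}" G F' g k] GF F'n k by (simp add: PS_def g_def)
    finally have c1: "real (card {x\<in>Good. ?v x j = G}) \<le> real (fact g * fact (k - g) * fact (n - k))" by linarith
    have ga: "a \<le> k - g" "(k - g) + a \<le> k" using d0 x0 aT by (auto simp: g_def)
    have "real (fact (n - k) * fact (k - g) * fact (k - (k - g))) * real (k choose a) \<le> real (fact (n - k) * fact k)"
      by (rule fact_split_bound[OF ga])
    moreover have "k - (k - g) = g"
    proof -
      have "g \<le> k" using card_mono[OF _ GF] F'n k finite_subset unfolding g_def by blast
      then show ?thesis by simp
    qed
    ultimately have "real (fact g * fact (k - g) * fact (n - k)) * real (k choose a) \<le> real M"
      by (simp add: M_def mult_ac)
    then show ?thesis using c1 by (meson mult_right_mono of_nat_0_le_iff order_trans)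
  qed
  have "real (card Good) * real (k choose a) \<le> real (\<Sum>G\<in>N. card {x\<in>Good. ?v x j = G}) * real (k choose a)"
  proof -
    have "card Good \<le> (\<Sum>G\<in>N. card {x\<in>Good. ?v x j = G})"
      by (subst GoodN) (rule card_UN_le[OF finN])
    then have "real (card Good) \<le> real (\<Sum>G\<in>N. card {x\<in>Good. ?v x j = G})" by (simp only: of_nat_le_iff)
    then show ?thesis by (intro mult_right_mono) auto
  qed
  also have "\<dots> = (\<Sum>G\<in>N. real (card {x\<in>Good. ?v x j = G}) * real (k choose a))"
    by (simp add: sum_distrib_right)
  also have "\<dots> \<le> (\<Sum>G\<in>N. real M)" by (rule sum_mono) (rule perG)
  also have "\<dots> = real (card N) * real M" by simp
  finally have main: "real (card Good) * real (k choose a) \<le> real (card N) * real M" .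
  have "real (card D) - 2 * h * T * real c \<le> real (card Good)"
    using cGood cB by (simp add: of_nat_mult[symmetric] del: of_nat_mult)
  then have "(real (card D) - 2 * h * T * real c) * real (k choose a) \<le> real (card Good) * real (k choose a)"
    by (intro mult_right_mono) auto
  with main show ?thesis by (simp add: D_def N_def M_def c_def)
qed

lemma walk_to_path:
  assumes "R\<^sup>*\<^sup>* a b"
  shows "\<exists>ps. ps \<noteq> [] \<and> hd ps = a \<and> last ps = b \<and> distinct ps \<and>
           (\<forall>i < length ps - 1. R (ps!i) (ps!Suc i)) \<and> set ps \<subseteq> insert a {c. \<exists>d. R d c}"
  using assms
proof (induction rule: converse_rtranclp_induct)
  case base
  then show ?case by (intro exI[of _ "[b]"]) auto
next
  case (step a c)
  then obtain ps where ps: "ps \<noteq> []" "hd ps = c" "last ps = b" "distinct ps"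
    "\<forall>i < length ps - 1. R (ps!i) (ps!Suc i)" "set ps \<subseteq> insert c {c. \<exists>d. R d c}" by blast
  show ?case
  proof (cases "a \<in> set ps")
    case True
    then obtain m where m: "m < length ps" "ps!m = a" by (metis in_set_conv_nth)
    define qs where "qs = drop m ps"
    have "qs \<noteq> []" using m by (simp add: qs_def)
    moreover have "hd qs = a" using m by (simp add: qs_def hd_drop_conv_nth)
    moreover have "last qs = b" using m ps by (simp add: qs_def)
    moreover have "distinct qs" using ps by (simp add: qs_def)
    moreover have "\<forall>i < length qs - 1. R (qs!i) (qs!Suc i)"
      using ps(5) m by (auto simp: qs_def)
    moreover have "set qs \<subseteq> insert a {c. \<exists>d. R d c}"
      using ps(6) step(1) by (auto simp: qs_def dest: in_set_dropD)
    ultimately show ?thesis by blast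
  next
    case False
    have "\<forall>i < length (a#ps) - 1. R ((a#ps)!i) ((a#ps)!Suc i)"
    proof (intro allI impI)
      fix i assume "i < length (a#ps) - 1"
      then show "R ((a#ps)!i) ((a#ps)!Suc i)"
        using ps step(1) by (cases i) (auto simp: hd_conv_nth)
    qed
    then show ?thesis using ps False step(1) by (intro exI[of _ "a#ps"]) auto
  qed
qed

definition wk :: "nat set \<Rightarrow> (nat \<Rightarrow> nat \<Rightarrow> bool) \<Rightarrow> nat set \<Rightarrow> nat \<Rightarrow> nat \<Rightarrow> bool" where
  "wk V lt U = (\<lambda>a b. a \<in> U \<and> b \<in> U \<and> hasse_adj V lt a b)"

lemma hasse_adj_sym: "hasse_adj V lt a b = hasse_adj V lt b a"
  by (auto simp: hasse_adj_def)

lemma wk_sym: "wk V lt U a b = wk V lt U b a"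
  by (auto simp: wk_def hasse_adj_def)

lemma wk_rev:
  assumes "(wk V lt U)\<^sup>*\<^sup>* a b" shows "(wk V lt U)\<^sup>*\<^sup>* b a"
proof -
  have "(wk V lt U)\<inverse>\<inverse>\<^sup>*\<^sup>* b a" using assms by (simp add: rtranclp_conversep)
  moreover have "(wk V lt U)\<inverse>\<inverse> = wk V lt U" using wk_sym by (intro ext) auto
  ultimately show ?thesis by simp
qed

lemma wk_mono:
  assumes "(wk V lt U)\<^sup>*\<^sup>* a b" "U \<subseteq> U'" shows "(wk V lt U')\<^sup>*\<^sup>* a b"
  using assms(1) by (rule rtranclp_mono[THEN predicate2D, rotated]) (use assms(2) in \<open>auto simp: wk_def\<close>)

lemma cycle_lemma:
  assumes nc: "\<not> graph_has_cycle V (hasse_adj V lt)"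
    and y: "y \<in> V" and xw: "x \<noteq> w" and ax: "hasse_adj V lt y x" and aw: "hasse_adj V lt y w"
    and walk: "(wk V lt U)\<^sup>*\<^sup>* x w" and U: "U \<subseteq> V - {y}" and xU: "x \<in> U"
  shows False
proof -
  obtain ps where ps: "ps \<noteq> []" "hd ps = x" "last ps = w" "distinct ps"
    "\<forall>i < length ps - 1. wk V lt U (ps!i) (ps!Suc i)" "set ps \<subseteq> insert x {c. \<exists>d. wk V lt U d c}"
    using walk_to_path[OF walk] by blast
  have setU: "set ps \<subseteq> U" using ps(6) xU by (auto simp: wk_def)
  have len: "length ps \<ge> 2"
  proof -
    obtain z zs where zz: "ps = z # zs" using ps(1) by (cases ps) auto
    have "zs \<noteq> []" using zz ps(2,3) xw by auto
    then show ?thesis using zz by (cases zs) auto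
  qed
  define cs where "cs = y # ps"
  have "length cs \<ge> 3" using len by (simp add: cs_def)
  moreover have "distinct cs" using ps setU U by (auto simp: cs_def)
  moreover have "set cs \<subseteq> V" using setU U y by (auto simp: cs_def)
  moreover have "\<forall>i < length cs - 1. hasse_adj V lt (cs ! i) (cs ! Suc i)"
  proof (intro allI impI)
    fix i assume i: "i < length cs - 1"
    show "hasse_adj V lt (cs ! i) (cs ! Suc i)"
    proof (cases i)
      case 0 then show ?thesis using ax ps by (simp add: cs_def hd_conv_nth)
    next
      case (Suc j) then show ?thesis using ps(5) i by (auto simp: cs_def wk_def)
    qed
  qed
  moreover have "hasse_adj V lt (last cs) (hd cs)"
    using ps aw hasse_adj_sym by (simp add: cs_def)
  ultimately have "graph_has_cycle V (hasse_adj V lt)" unfolding graph_has_cycle_def by blast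
  then show False using nc by simp
qed

lemma sp_V: "strict_poset V lt \<Longrightarrow> finite V" by (simp add: strict_poset_def)

lemma cover_below:
  assumes sp: "strict_poset V lt" and a: "a \<in> V" and b: "b \<in> V" and ab: "lt a b"
  shows "\<exists>w. hasse_edge V lt w b \<and> (w = a \<or> lt a w)"
proof -
  have fin: "finite V" using sp by (simp add: strict_poset_def)
  have irr: "\<And>x. x \<in> V \<Longrightarrow> \<not> lt x x" using sp by (simp add: strict_poset_def)
  have tr: "\<And>x y z. x \<in> V \<Longrightarrow> y \<in> V \<Longrightarrow> z \<in> V \<Longrightarrow> lt x y \<Longrightarrow> lt y z \<Longrightarrow> lt x z"
    using sp unfolding strict_poset_def by blast
  define Z where "Z = {w \<in> V. (w = a \<or> lt a w) \<and> lt w b}"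
  define up where "up = (\<lambda>w. card {c \<in> V. lt w c})"
  have "a \<in> Z" using a ab by (simp add: Z_def)
  then obtain w where w: "w \<in> Z" and wmin: "\<And>z. z \<in> Z \<Longrightarrow> up w \<le> up z"
    using ex_has_least_nat[of "\<lambda>w. w \<in> Z" a up] by blast
  have "hasse_edge V lt w b"
    unfolding hasse_edge_def
  proof (intro conjI)
    show "w \<in> V" "b \<in> V" "lt w b" using w b by (auto simp: Z_def)
    show "\<not> (\<exists>z\<in>V. lt w z \<and> lt z b)"
    proof
      assume "\<exists>z\<in>V. lt w z \<and> lt z b"
      then obtain z where z: "z \<in> V" "lt w z" "lt z b" by blast
      have wV: "w \<in> V" using w by (simp add: Z_def)
      have "z \<in> Z" using w z a tr[of a w z] unfolding Z_def by auto
      have s1: "{c \<in> V. lt z c} \<subseteq> {c \<in> V. lt w c}"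
        using z wV tr[of w z] by auto
      have "z \<in> {c \<in> V. lt w c}" "z \<notin> {c \<in> V. lt z c}" using z irr by auto
      then have sub: "{c \<in> V. lt z c} \<subset> {c \<in> V. lt w c}" using s1 by blast
      have "up z < up w" unfolding up_def by (rule psubset_card_mono[OF _ sub]) (use fin in auto)
      with wmin[OF \<open>z \<in> Z\<close>] show False by simp
    qed
  qed
  then show ?thesis using w by (auto simp: Z_def)
qed

definition flip :: "(nat \<Rightarrow> nat \<Rightarrow> bool) \<Rightarrow> nat \<Rightarrow> nat \<Rightarrow> bool" where
  "flip lt = (\<lambda>a b. lt b a)"

lemma sp_flip: "strict_poset V lt \<Longrightarrow> strict_poset V (flip lt)"
  unfolding strict_poset_def flip_def by blast

lemma he_flip: "hasse_edge V (flip lt) a b = hasse_edge V lt b a"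
  unfolding hasse_edge_def flip_def by blast

lemma ha_flip: "hasse_adj V (flip lt) = hasse_adj V lt"
  unfolding hasse_adj_def by (intro ext) (auto simp: he_flip)

lemma wk_flip: "wk V (flip lt) = wk V lt"
  unfolding wk_def by (simp add: ha_flip)

lemma cover_above:
  assumes sp: "strict_poset V lt" and a: "a \<in> V" and b: "b \<in> V" and ab: "lt a b"
  shows "\<exists>w. hasse_edge V lt a w \<and> (w = b \<or> lt w b)"
proof -
  have "flip lt b a" using ab by (simp add: flip_def)
  then obtain w where "hasse_edge V (flip lt) w a" "w = b \<or> flip lt b w"
    using cover_below[OF sp_flip[OF sp] b a] by blast
  moreover have "hasse_edge V lt a w" using \<open>hasse_edge V (flip lt) w a\<close> he_flip by metis
  ultimately show ?thesis unfolding flip_def by blast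
qed

lemma walk_between:
  assumes sp: "strict_poset V lt"
  shows "a \<in> V \<Longrightarrow> b \<in> V \<Longrightarrow> lt a b \<Longrightarrow>
     (wk V lt {c \<in> V. (c = a \<or> lt a c) \<and> (c = b \<or> lt c b)})\<^sup>*\<^sup>* a b"
proof (induction "card {c \<in> V. lt a c \<and> lt c b}" arbitrary: b rule: less_induct)
  case less
  have fin: "finite V" using sp by (simp add: strict_poset_def)
  have irr: "\<And>x. x \<in> V \<Longrightarrow> \<not> lt x x" using sp by (simp add: strict_poset_def)
  have tr: "\<And>x y z. x \<in> V \<Longrightarrow> y \<in> V \<Longrightarrow> z \<in> V \<Longrightarrow> lt x y \<Longrightarrow> lt y z \<Longrightarrow> lt x z"
    using sp unfolding strict_poset_def by blast
  obtain w where w: "hasse_edge V lt w b" "w = a \<or> lt a w"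
    using cover_below[OF sp less.prems] by blast
  have wV: "w \<in> V" "lt w b" using w by (auto simp: hasse_edge_def)
  define U where "U = {c \<in> V. (c = a \<or> lt a c) \<and> (c = b \<or> lt c b)}"
  have lastS: "wk V lt U w b"
    using w wV less.prems by (auto simp: wk_def U_def hasse_adj_def)
  show ?case
  proof (cases "w = a")
    case True then show ?thesis using lastS by (simp add: U_def)
  next
    case False
    then have aw: "lt a w" using w by simp
    have s1: "{c \<in> V. lt a c \<and> lt c w} \<subseteq> {c \<in> V. lt a c \<and> lt c b}"
      using wV less.prems tr[of _ w b] by auto
    have "w \<in> {c \<in> V. lt a c \<and> lt c b}" "w \<notin> {c \<in> V. lt a c \<and> lt c w}"
      using aw wV irr by auto
    then have sub: "{c \<in> V. lt a c \<and> lt c w} \<subset> {c \<in> V. lt a c \<and> lt c b}" using s1 by blast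
    have "card {c \<in> V. lt a c \<and> lt c w} < card {c \<in> V. lt a c \<and> lt c b}"
      by (rule psubset_card_mono[OF _ sub]) (use fin in auto)
    from less.hyps[OF this less.prems(1) wV(1) aw]
    have "(wk V lt {c \<in> V. (c = a \<or> lt a c) \<and> (c = w \<or> lt c w)})\<^sup>*\<^sup>* a w" .
    moreover have "{c \<in> V. (c = a \<or> lt a c) \<and> (c = w \<or> lt c w)} \<subseteq> U"
      using wV less.prems tr[of _ w b] unfolding U_def by auto
    ultimately have "(wk V lt U)\<^sup>*\<^sup>* a w" by (rule wk_mono)
    then show ?thesis using lastS unfolding U_def[symmetric] by (rule rtranclp.rtrancl_into_rtrancl)
  qed
qed

lemma rel_up:
  assumes sp: "strict_poset V lt" and nc: "\<not> graph_has_cycle V (hasse_adj V lt)"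
    and SV: "S \<subseteq> V" and yV: "y \<in> V" and yS: "y \<notin> S" and xS: "x \<in> S"
    and xy: "hasse_edge V lt x y"
    and uniq: "\<forall>x'\<in>S. hasse_adj V lt x' y \<longrightarrow> x' = x"
    and conn: "\<forall>a\<in>S. \<forall>b\<in>S. (wk V lt S)\<^sup>*\<^sup>* a b" and zS: "z \<in> S"
  shows "lt z y \<Longrightarrow> z = x \<or> lt z x" and "\<not> lt y z"
proof -
  have irr: "\<And>x. x \<in> V \<Longrightarrow> \<not> lt x x" using sp by (simp add: strict_poset_def)
  have tr: "\<And>x y z. x \<in> V \<Longrightarrow> y \<in> V \<Longrightarrow> z \<in> V \<Longrightarrow> lt x y \<Longrightarrow> lt y z \<Longrightarrow> lt x z"
    using sp unfolding strict_poset_def by blast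
  have zV: "z \<in> V" using zS SV by auto
  have xV: "x \<in> V" using xS SV by auto
  have lxy: "lt x y" using xy by (simp add: hasse_edge_def)
  have zx0: "(wk V lt S)\<^sup>*\<^sup>* z x" using conn zS xS by blast
  have SVy: "S \<subseteq> V - {y}" using SV yS by blast
  have zx: "(wk V lt (V - {y}))\<^sup>*\<^sup>* z x" by (rule wk_mono[OF zx0 SVy])
  have adjx: "hasse_adj V lt y x" using xy by (simp add: hasse_adj_def)
  show "lt z y \<Longrightarrow> z = x \<or> lt z x"
  proof -
    assume zy: "lt z y"
    obtain w where w: "hasse_edge V lt w y" "w = z \<or> lt z w"
      using cover_below[OF sp zV yV zy] by blast
    show ?thesis
    proof (rule ccontr)
      assume nz: "\<not> (z = x \<or> lt z x)"
      have wx: "w \<noteq> x" using w nz by auto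
      have wS: "w \<notin> S" using uniq wx w(1) by (auto simp: hasse_adj_def)
      have wV: "w \<in> V" and wy: "lt w y" using w(1) by (auto simp: hasse_edge_def)
      have lzw: "lt z w" using w wS zS by auto
      have U1: "{c \<in> V. (c = z \<or> lt z c) \<and> (c = w \<or> lt c w)} \<subseteq> V - {y}"
        using wy irr[of y] yV tr[of y w y] wV by auto
      have "(wk V lt (V - {y}))\<^sup>*\<^sup>* z w"
        by (rule wk_mono[OF walk_between[OF sp zV wV lzw] U1])
      then have "(wk V lt (V - {y}))\<^sup>*\<^sup>* w z" by (rule wk_rev)
      then have wlk: "(wk V lt (V - {y}))\<^sup>*\<^sup>* w x" using zx by (rule rtranclp_trans)
      have hw: "hasse_adj V lt y w" using w(1) by (simp add: hasse_adj_def)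
      have wU: "w \<in> V - {y}" using wV wy irr[of y] yV by auto
      show False by (rule cycle_lemma[OF nc yV wx hw adjx wlk subset_refl wU])
    qed
  qed
  show "\<not> lt y z"
  proof
    assume yz: "lt y z"
    obtain w where w: "hasse_edge V lt y w" "w = z \<or> lt w z"
      using cover_above[OF sp yV zV yz] by blast
    have wV: "w \<in> V" and yw: "lt y w" using w(1) by (auto simp: hasse_edge_def)
    have wx: "w \<noteq> x" using yw lxy irr[of x] tr[of x y x] xV yV by auto
    have wS: "w \<notin> S" using uniq wx w(1) by (auto simp: hasse_adj_def)
    have lwz: "lt w z" using w wS zS by auto
    have U1: "{c \<in> V. (c = w \<or> lt w c) \<and> (c = z \<or> lt c z)} \<subseteq> V - {y}"
      using yw irr[of y] yV tr[of y w y] wV by auto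
    have "(wk V lt (V - {y}))\<^sup>*\<^sup>* w z"
      by (rule wk_mono[OF walk_between[OF sp wV zV lwz] U1])
    then have wlk: "(wk V lt (V - {y}))\<^sup>*\<^sup>* w x" using zx by (rule rtranclp_trans)
    have hw: "hasse_adj V lt y w" using w(1) by (simp add: hasse_adj_def)
    have wU: "w \<in> V - {y}" using wV yw irr[of y] yV by auto
    show False by (rule cycle_lemma[OF nc yV wx hw adjx wlk subset_refl wU])
  qed
qed

lemma rel_down:
  assumes sp: "strict_poset V lt" and nc: "\<not> graph_has_cycle V (hasse_adj V lt)"
    and SV: "S \<subseteq> V" and yV: "y \<in> V" and yS: "y \<notin> S" and xS: "x \<in> S"
    and xy: "hasse_edge V lt y x"
    and uniq: "\<forall>x'\<in>S. hasse_adj V lt x' y \<longrightarrow> x' = x"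
    and conn: "\<forall>a\<in>S. \<forall>b\<in>S. (wk V lt S)\<^sup>*\<^sup>* a b" and zS: "z \<in> S"
  shows "lt y z \<Longrightarrow> z = x \<or> lt x z" and "\<not> lt z y"
proof -
  have A: "\<not> graph_has_cycle V (hasse_adj V (flip lt))" using nc by (simp add: ha_flip)
  have B: "hasse_edge V (flip lt) x y" using xy by (simp add: he_flip)
  have C: "\<forall>x'\<in>S. hasse_adj V (flip lt) x' y \<longrightarrow> x' = x" using uniq by (simp add: ha_flip)
  have D: "\<forall>a\<in>S. \<forall>b\<in>S. (wk V (flip lt) S)\<^sup>*\<^sup>* a b" using conn by (simp add: wk_flip)
  note R = rel_up[OF sp_flip[OF sp] A SV yV yS xS B C D zS]
  show "lt y z \<Longrightarrow> z = x \<or> lt x z" using R(1) by (simp add: flip_def)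
  show "\<not> lt z y" using R(2) by (simp add: flip_def)
qed


lemma cross:
  assumes "R\<^sup>*\<^sup>* a b" "a \<in> S" "b \<notin> S"
  shows "\<exists>c d. R c d \<and> c \<in> S \<and> d \<notin> S"
  using assms
proof (induction rule: rtranclp_induct)
  case base then show ?case by simp
next
  case (step b c)
  then show ?case by (cases "b \<in> S") auto
qed

lemma tree_induct:
  assumes tp: "tree_poset V lt" and v: "v \<in> V" and base: "P {v}"
    and step: "\<And>S x y. S \<subseteq> V \<Longrightarrow> v \<in> S \<Longrightarrow> x \<in> S \<Longrightarrow> y \<in> V \<Longrightarrow> y \<notin> S \<Longrightarrow>
       hasse_adj V lt x y \<Longrightarrow> (\<forall>x'\<in>S. hasse_adj V lt x' y \<longrightarrow> x' = x) \<Longrightarrow>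
       (\<forall>a\<in>S. \<forall>b\<in>S. (wk V lt S)\<^sup>*\<^sup>* a b) \<Longrightarrow> P S \<Longrightarrow> P (insert y S)"
  shows "P V"
proof -
  have sp: "strict_poset V lt" and nc: "\<not> graph_has_cycle V (hasse_adj V lt)"
    and gc: "graph_connected V (hasse_adj V lt)" using tp by (auto simp: tree_poset_def)
  have fin: "finite V" using sp by (simp add: strict_poset_def)
  have main: "1 \<le> m \<Longrightarrow> m \<le> card V \<Longrightarrow>
     (\<exists>S. S \<subseteq> V \<and> v \<in> S \<and> card S = m \<and> (\<forall>a\<in>S. \<forall>b\<in>S. (wk V lt S)\<^sup>*\<^sup>* a b) \<and> P S)" for m
  proof (induction m)
    case 0 then show ?case by simp
  next
    case (Suc m)
    show ?case
    proof (cases "m = 0")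
      case True
      then show ?thesis using v base by (intro exI[of _ "{v}"]) auto
    next
      case False
      then obtain S where S: "S \<subseteq> V" "v \<in> S" "card S = m"
        "\<forall>a\<in>S. \<forall>b\<in>S. (wk V lt S)\<^sup>*\<^sup>* a b" "P S" using Suc by auto
      have "S \<noteq> V" using S(3) Suc.prems by auto
      then obtain u where u: "u \<in> V" "u \<notin> S" using S(1) by blast
      have "(\<lambda>a b. a \<in> V \<and> b \<in> V \<and> hasse_adj V lt a b)\<^sup>*\<^sup>* v u"
        using gc v u unfolding graph_connected_def by blast
      then obtain c d where cd: "c \<in> V" "d \<in> V" "hasse_adj V lt c d" "c \<in> S" "d \<notin> S"
        using cross[of _ v u S] S(2) u(2) by blast
      have uniq: "\<forall>x'\<in>S. hasse_adj V lt x' d \<longrightarrow> x' = c"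
      proof (intro ballI impI)
        fix x' assume x': "x' \<in> S" "hasse_adj V lt x' d"
        show "x' = c"
        proof (rule ccontr)
          assume ne: "x' \<noteq> c"
          have w: "(wk V lt S)\<^sup>*\<^sup>* x' c" using S(4) x'(1) cd(4) by blast
          have SU: "S \<subseteq> V - {d}" using S(1) cd(5) by blast
          have a1: "hasse_adj V lt d x'" using x'(2) hasse_adj_sym by metis
          have a2: "hasse_adj V lt d c" using cd(3) hasse_adj_sym by metis
          show False by (rule cycle_lemma[OF nc cd(2) ne a1 a2 w SU x'(1)])
        qed
      qed
      have conn': "\<forall>a\<in>insert d S. \<forall>b\<in>insert d S. (wk V lt (insert d S))\<^sup>*\<^sup>* a b"
      proof -
        have inS: "(wk V lt (insert d S))\<^sup>*\<^sup>* a b" if "a \<in> S" "b \<in> S" for a b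
          using wk_mono[of V lt S a b "insert d S"] S(4) that by blast
        have e: "wk V lt (insert d S) c d" using cd by (auto simp: wk_def)
        have toD: "(wk V lt (insert d S))\<^sup>*\<^sup>* a d" if "a \<in> S" for a
          using inS[OF that cd(4)] e by (rule rtranclp.rtrancl_into_rtrancl)
        show ?thesis
        proof (intro ballI)
          fix a b assume "a \<in> insert d S" "b \<in> insert d S"
          then show "(wk V lt (insert d S))\<^sup>*\<^sup>* a b"
            using inS toD wk_rev by blast
        qed
      qed
      have "P (insert d S)" by (rule step[OF S(1) S(2) cd(4) cd(2) cd(5) cd(3) uniq S(4) S(5)])
      moreover have "card (insert d S) = Suc m" using S(3) cd(5) fin S(1) finite_subset by fastforce
      ultimately show ?thesis using S cd conn' by (intro exI[of _ "insert d S"]) auto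
    qed
  qed
  have "card V > 0" using v fin card_gt_0_iff by blast
  then have "1 \<le> card V" by simp
  then obtain S where S: "S \<subseteq> V" "card S = card V" "P S" using main by blast
  have "S = V" using card_subset_eq[OF fin S(1) S(2)] .
  then show ?thesis using S(3) by simp
qed

lemma edges_insert:
  assumes sp: "strict_poset V lt" and SV: "S \<subseteq> V" and xS: "x \<in> S" and yV: "y \<in> V" and yS: "y \<notin> S"
    and adj: "hasse_adj V lt x y" and uniq: "\<forall>x'\<in>S. hasse_adj V lt x' y \<longrightarrow> x' = x"
  shows "{e \<in> hasse_diagram V lt. fst e \<in> insert y S \<and> snd e \<in> insert y S}
      = insert (if lt x y then (x,y) else (y,x)) {e \<in> hasse_diagram V lt. fst e \<in> S \<and> snd e \<in> S}"
    and "(if lt x y then (x,y) else (y,x)) \<notin> {e \<in> hasse_diagram V lt. fst e \<in> S \<and> snd e \<in> S}"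
proof -
  have irr: "\<And>x. x \<in> V \<Longrightarrow> \<not> lt x x" using sp by (simp add: strict_poset_def)
  have tr: "\<And>x y z. x \<in> V \<Longrightarrow> y \<in> V \<Longrightarrow> z \<in> V \<Longrightarrow> lt x y \<Longrightarrow> lt y z \<Longrightarrow> lt x z"
    using sp unfolding strict_poset_def by blast
  have xV: "x \<in> V" using xS SV by auto
  have asym: "\<not> (lt x y \<and> lt y x)" using irr[OF xV] tr[OF xV yV xV] by blast
  have new: "(if lt x y then (x,y) else (y,x)) \<in> hasse_diagram V lt"
    using adj asym by (auto simp: hasse_diagram_def hasse_adj_def hasse_edge_def)
  show "(if lt x y then (x,y) else (y,x)) \<notin> {e \<in> hasse_diagram V lt. fst e \<in> S \<and> snd e \<in> S}"
    using yS by auto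
  show "{e \<in> hasse_diagram V lt. fst e \<in> insert y S \<and> snd e \<in> insert y S}
      = insert (if lt x y then (x,y) else (y,x)) {e \<in> hasse_diagram V lt. fst e \<in> S \<and> snd e \<in> S}"
  proof (intro equalityI subsetI)
    fix e assume e: "e \<in> {e \<in> hasse_diagram V lt. fst e \<in> insert y S \<and> snd e \<in> insert y S}"
    obtain a b where ab: "e = (a,b)" by (cases e)
    have he: "hasse_edge V lt a b" using e ab by (simp add: hasse_diagram_def)
    then have abV: "a \<in> V" "b \<in> V" "lt a b" by (auto simp: hasse_edge_def)
    show "e \<in> insert (if lt x y then (x,y) else (y,x)) {e \<in> hasse_diagram V lt. fst e \<in> S \<and> snd e \<in> S}"
    proof (cases "a = y")
      case True
      then have "b \<noteq> y" using abV irr by auto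
      then have "b \<in> S" using e ab by auto
      moreover have "hasse_adj V lt b y" using he True by (simp add: hasse_adj_def)
      ultimately have "b = x" using uniq by blast
      then show ?thesis using True ab abV asym by auto
    next
      case False
      show ?thesis
      proof (cases "b = y")
        case True
        then have "a \<in> S" using e ab False by auto
        moreover have "hasse_adj V lt a y" using he True by (simp add: hasse_adj_def)
        ultimately have "a = x" using uniq by blast
        then show ?thesis using True ab abV by auto
      next
        case False
        then show ?thesis using e ab \<open>a \<noteq> y\<close> by auto
      qed
    qed
  next
    fix e assume "e \<in> insert (if lt x y then (x,y) else (y,x)) {e \<in> hasse_diagram V lt. fst e \<in> S \<and> snd e \<in> S}"
    then show "e \<in> {e \<in> hasse_diagram V lt. fst e \<in> insert y S \<and> snd e \<in> insert y S}"
      using new xS by (auto split: if_splits)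
  qed
qed

lemma prune:
  fixes X :: "'x set" and vs :: "'x \<Rightarrow> 'u set" and \<omega> :: "'u \<Rightarrow> real"
  assumes finX: "finite X" and om: "\<forall>u. \<omega> u \<ge> 0"
  shows "finite R0 \<Longrightarrow> \<exists>R \<subseteq> R0. (\<forall>u\<in>R. real (card {x\<in>X. vs x \<subseteq> R \<and> u \<in> vs x}) \<ge> \<omega> u) \<and>
     real (card {x\<in>X. vs x \<subseteq> R}) \<ge> real (card {x\<in>X. vs x \<subseteq> R0}) - (\<Sum>u\<in>R0. \<omega> u)"
proof (induction "card R0" arbitrary: R0 rule: less_induct)
  case less
  show ?case
  proof (cases "\<forall>u\<in>R0. real (card {x\<in>X. vs x \<subseteq> R0 \<and> u \<in> vs x}) \<ge> \<omega> u")
    case True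
    have "(\<Sum>u\<in>R0. \<omega> u) \<ge> 0" using om by (simp add: sum_nonneg)
    then show ?thesis using True by (intro exI[of _ R0]) auto
  next
    case False
    then obtain u where u: "u \<in> R0" "real (card {x\<in>X. vs x \<subseteq> R0 \<and> u \<in> vs x}) < \<omega> u" by auto
    define R1 where "R1 = R0 - {u}"
    have c1: "card R1 < card R0" unfolding R1_def by (rule card_Diff1_less[OF less.prems u(1)])
    have f1: "finite R1" using less.prems by (simp add: R1_def)
    obtain R where R: "R \<subseteq> R1" "\<forall>w\<in>R. real (card {x\<in>X. vs x \<subseteq> R \<and> w \<in> vs x}) \<ge> \<omega> w"
      "real (card {x\<in>X. vs x \<subseteq> R}) \<ge> real (card {x\<in>X. vs x \<subseteq> R1}) - (\<Sum>w\<in>R1. \<omega> w)"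
      using less.hyps[OF c1 f1] by blast
    have eq: "{x\<in>X. vs x \<subseteq> R1} = {x\<in>X. vs x \<subseteq> R0} - {x\<in>X. vs x \<subseteq> R0 \<and> u \<in> vs x}"
      by (auto simp: R1_def)
    have "card {x\<in>X. vs x \<subseteq> R1} = card {x\<in>X. vs x \<subseteq> R0} - card {x\<in>X. vs x \<subseteq> R0 \<and> u \<in> vs x}"
      unfolding eq by (rule card_Diff_subset) (use finX in auto)
    moreover have "card {x\<in>X. vs x \<subseteq> R0 \<and> u \<in> vs x} \<le> card {x\<in>X. vs x \<subseteq> R0}"
      by (rule card_mono) (use finX in auto)
    ultimately have "real (card {x\<in>X. vs x \<subseteq> R1}) \<ge> real (card {x\<in>X. vs x \<subseteq> R0}) - \<omega> u"
      using u(2) by linarith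
    moreover have "(\<Sum>w\<in>R0. \<omega> w) = \<omega> u + (\<Sum>w\<in>R1. \<omega> w)"
      unfolding R1_def using u(1) less.prems by (simp add: sum.remove)
    ultimately show ?thesis using R R1_def by (intro exI[of _ R]) auto
  qed
qed

lemma card_le_n: "F \<subseteq> {1..n} \<Longrightarrow> card F \<le> n"
  using card_mono[of "{1..n}" F] by simp

lemma card_Ls_eq:
  assumes s: "\<sigma> \<in> permutations_of_set {1..n}" and FamS: "\<forall>F\<in>Fam. F \<subseteq> {1..n}"
  shows "length (Ls n Fam \<sigma>) = card {F\<in>Fam. set (take (card F) \<sigma>) = F}"
proof -
  have "length (Ls n Fam \<sigma>) = card {k. k \<le> n \<and> set (take k \<sigma>) \<in> Fam}" by (rule Ls_props(3))
  also have "\<dots> = card ((\<lambda>k. set (take k \<sigma>)) ` {k. k \<le> n \<and> set (take k \<sigma>) \<in> Fam})"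
  proof (rule card_image[symmetric], rule inj_onI)
    fix a b assume "a \<in> {k. k \<le> n \<and> set (take k \<sigma>) \<in> Fam}" "b \<in> {k. k \<le> n \<and> set (take k \<sigma>) \<in> Fam}"
      and e: "set (take a \<sigma>) = set (take b \<sigma>)"
    then have an: "a \<le> n" and bn: "b \<le> n" by auto
    have ca: "card (set (take a \<sigma>)) = a" by (rule card_take_perm[OF s an])
    have cb: "card (set (take b \<sigma>)) = b" by (rule card_take_perm[OF s bn])
    have "a = card (set (take a \<sigma>))" using ca by simp
    also have "\<dots> = card (set (take b \<sigma>))" using e by simp
    also have "\<dots> = b" by (rule cb)
    finally show "a = b" .
  qed
  also have "(\<lambda>k. set (take k \<sigma>)) ` {k. k \<le> n \<and> set (take k \<sigma>) \<in> Fam} = {F\<in>Fam. set (take (card F) \<sigma>) = F}"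
  proof (intro equalityI subsetI)
    fix F assume "F \<in> (\<lambda>k. set (take k \<sigma>)) ` {k. k \<le> n \<and> set (take k \<sigma>) \<in> Fam}"
    then obtain k where k: "k \<le> n" "set (take k \<sigma>) \<in> Fam" "F = set (take k \<sigma>)" by auto
    then show "F \<in> {F\<in>Fam. set (take (card F) \<sigma>) = F}" using card_take_perm[OF s k(1)] by simp
  next
    fix F assume F: "F \<in> {F\<in>Fam. set (take (card F) \<sigma>) = F}"
    then have "card F \<le> n" using FamS card_le_n by blast
    then show "F \<in> (\<lambda>k. set (take k \<sigma>)) ` {k. k \<le> n \<and> set (take k \<sigma>) \<in> Fam}"
      using F by (intro image_eqI[of _ _ "card F"]) auto
  qed
  finally show ?thesis .
qed

lemma win_count:
  assumes FamS: "\<forall>F\<in>Fam. F \<subseteq> {1..n}" and finF: "finite Fam" and q: "q \<ge> 1"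
  shows "real (card (Win n Fam q)) \<ge> (\<Sum>F\<in>Fam. real (fact (card F) * fact (n - card F))) - fact n * (real q - 1)"
proof -
  define PS where "PS = permutations_of_set {1..n}"
  have W: "Win n Fam q = Sigma PS (\<lambda>\<sigma>. {s. s + q \<le> length (Ls n Fam \<sigma>)})"
    by (auto simp: Win_def PS_def)
  have finS: "finite {s. s + q \<le> L}" for L :: nat
    by (rule finite_subset[of _ "{..L}"]) auto
  have cs: "real (card {s. s + q \<le> L}) \<ge> real L - (real q - 1)" for L :: nat
  proof (cases "q \<le> L")
    case True
    then have "{s. s + q \<le> L} = {..L - q}" by auto
    then show ?thesis using True q by simp
  next
    case False then show ?thesis by simp
  qed
  have "card (Win n Fam q) = (\<Sum>\<sigma>\<in>PS. card {s. s + q \<le> length (Ls n Fam \<sigma>)})"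
    unfolding W by (rule card_SigmaI) (auto simp: PS_def finS)
  then have "real (card (Win n Fam q)) = (\<Sum>\<sigma>\<in>PS. real (card {s. s + q \<le> length (Ls n Fam \<sigma>)}))" by simp
  also have "\<dots> \<ge> (\<Sum>\<sigma>\<in>PS. real (length (Ls n Fam \<sigma>)) - (real q - 1))"
    by (rule sum_mono) (rule cs)
  finally have A: "real (card (Win n Fam q)) \<ge> (\<Sum>\<sigma>\<in>PS. real (length (Ls n Fam \<sigma>))) - real (card PS) * (real q - 1)"
    by (simp add: sum_subtractf)
  have "(\<Sum>\<sigma>\<in>PS. real (length (Ls n Fam \<sigma>))) = (\<Sum>\<sigma>\<in>PS. real (card {F\<in>Fam. set (take (card F) \<sigma>) = F}))"
  proof (intro sum.cong refl)
    fix \<sigma> assume "\<sigma> \<in> PS"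
    then show "real (length (Ls n Fam \<sigma>)) = real (card {F\<in>Fam. set (take (card F) \<sigma>) = F})"
      using card_Ls_eq[of \<sigma> n Fam] FamS by (simp add: PS_def)
  qed
  also have "\<dots> = (\<Sum>\<sigma>\<in>PS. \<Sum>F\<in>Fam. if set (take (card F) \<sigma>) = F then 1 else 0)"
    by (intro sum.cong refl) (simp add: sum.If_cases finF Int_def)
  also have "\<dots> = (\<Sum>F\<in>Fam. \<Sum>\<sigma>\<in>PS. if set (take (card F) \<sigma>) = F then 1 else 0)"
    by (rule sum.swap)
  also have "\<dots> = (\<Sum>F\<in>Fam. real (card {\<sigma>\<in>PS. set (take (card F) \<sigma>) = F}))"
    by (intro sum.cong refl) (simp add: sum.If_cases PS_def Int_def)
  also have "\<dots> = (\<Sum>F\<in>Fam. real (fact (card F) * fact (n - card F)))"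
  proof (intro sum.cong refl)
    fix F assume "F \<in> Fam"
    then show "real (card {\<sigma>\<in>PS. set (take (card F) \<sigma>) = F}) = real (fact (card F) * fact (n - card F))"
      using chain_card[of "{1..n}" F "card F"] FamS by (simp add: PS_def)
  qed
  finally have B: "(\<Sum>\<sigma>\<in>PS. real (length (Ls n Fam \<sigma>))) = (\<Sum>F\<in>Fam. real (fact (card F) * fact (n - card F)))" .
  have "card PS = fact n" by (simp add: PS_def)
  then have cP: "real (card PS) = fact n" by simp
  from A show ?thesis by (simp only: B cP)
qed

lemma lubell_fact:
  assumes FamS: "\<forall>F\<in>Fam. F \<subseteq> {1..n}"
  shows "(\<Sum>F\<in>Fam. real (fact (card F) * fact (n - card F))) = fact n * lubell_mass n Fam"
proof -
  have e: "real (fact (card F) * fact (n - card F)) = fact n * (1 / real (n choose card F))" if "F \<in> Fam" for F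
  proof -
    have "card F \<le> n" using FamS that card_le_n by blast
    then have b: "real (n choose card F) = fact n / (fact (card F) * fact (n - card F))" by (rule binomial_fact)
    have "(fact n :: real) \<noteq> 0" by simp
    then show ?thesis unfolding b by simp
  qed
  have "(\<Sum>F\<in>Fam. real (fact (card F) * fact (n - card F))) = (\<Sum>F\<in>Fam. fact n * (1 / real (n choose card F)))"
    by (rule sum.cong[OF refl]) (rule e)
  also have "\<dots> = fact n * lubell_mass n Fam" unfolding lubell_mass_def by (rule sum_distrib_left[symmetric])
  finally show ?thesis .
qed

locale emb =
  fixes n q l m T :: nat and Fam :: "nat set set" and \<Gamma> :: "nat set set set"
    and V :: "nat set" and lt :: "nat \<Rightarrow> nat \<Rightarrow> bool" and r :: "nat \<Rightarrow> nat"
    and R :: "(nat \<times> nat set) set" and v :: nat and F0 :: "nat set" and \<delta> \<gamma> :: real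
  assumes FamS: "\<forall>F\<in>Fam. F \<subseteq> {1..n}" and gp: "gapped l Fam"
    and Tmid: "\<forall>F\<in>Fam. \<forall>G\<in>Fam. card G \<le> card F + T" and T1: "1 \<le> T"
    and sizes: "\<forall>F\<in>Fam. card F + T + l * q \<le> n \<and> l * q + T \<le> card F"
    and bigN: "\<forall>F\<in>Fam. 4 * real m * real T \<le> \<delta> * real (n - card F) \<and> 4 * real m * real T \<le> \<delta> * real (card F)"
    and binom: "\<forall>F\<in>Fam. \<forall>a. 1 \<le> a \<longrightarrow> a \<le> l * q \<longrightarrow>
        3 * \<gamma> * real n ^ a \<le> \<delta> / 2 * real ((n - card F) choose a) \<and> 3 * \<gamma> * real n ^ a \<le> \<delta> / 2 * real (card F choose a)"
    and gm: "real m \<le> 2 * \<gamma> * real n" and n1: "1 \<le> n" and gpos: "\<gamma> > 0" and dpos: "\<delta> > 0"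
    and tp: "tree_poset V lt" and mV: "card V = m" and rh: "rev_hom V lt q r"
    and bc: "bounded_collection n (\<gamma> / 2) l Fam \<Gamma>"
    and RS: "R \<subseteq> {1..q} \<times> Fam"
    and stab: "\<forall>i F. (i, F) \<in> R \<longrightarrow> \<delta> * real (fact (card F) * fact (n - card F))
         \<le> real (card {x \<in> Win n Fam q. (\<forall>i'\<in>{1..q}. (i', vert n Fam q x i') \<in> R) \<and> vert n Fam q x i = F})"
    and vV: "v \<in> V" and F0R: "(r v, F0) \<in> R" and l1: "1 \<le> l"
begin

definition Phi :: "nat set \<Rightarrow> (nat \<Rightarrow> nat set) set" where
  "Phi S = {\<phi> \<in> S \<rightarrow>\<^sub>E Fam. \<phi> v = F0 \<and> inj_on \<phi> S \<and> (\<forall>a\<in>S. \<forall>b\<in>S. \<phi> a \<subset> \<phi> b \<longleftrightarrow> lt a b)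
      \<and> \<phi> ` S \<notin> \<Gamma> \<and> (\<forall>a\<in>S. (r a, \<phi> a) \<in> R)}"

lemma sp: "strict_poset V lt" using tp by (simp add: tree_poset_def)
lemma irr: "a \<in> V \<Longrightarrow> \<not> lt a a" using sp by (simp add: strict_poset_def)
lemma trn: "a \<in> V \<Longrightarrow> b \<in> V \<Longrightarrow> c \<in> V \<Longrightarrow> lt a b \<Longrightarrow> lt b c \<Longrightarrow> lt a c"
  using sp unfolding strict_poset_def by blast
lemma finV: "finite V" using sp by (simp add: strict_poset_def)
lemma finFam: "finite Fam"
proof -
  have "Fam \<subseteq> Pow {1..n}" using FamS by auto
  then show ?thesis by (rule finite_subset) simp
qed

lemma finPhi: "finite (Phi S)" if "finite S"
proof -
  have "Phi S \<subseteq> S \<rightarrow>\<^sub>E Fam" by (auto simp: Phi_def)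
  moreover have "finite (S \<rightarrow>\<^sub>E Fam)" using that finFam by (rule finite_PiE)
  ultimately show ?thesis by (rule finite_subset)
qed

lemma bc1: "\<forall>F\<in>Fam. {F} \<notin> \<Gamma>" using bc by (simp add: bounded_collection_def)
lemma bc2: "D \<subseteq> Fam \<Longrightarrow> D \<notin> \<Gamma> \<Longrightarrow> real (card {F\<in>Fam. insert F D \<in> \<Gamma>}) < \<gamma> / 2 * real n ^ l"
  using bc by (simp add: bounded_collection_def)

lemma finish:
  assumes S: "S \<subseteq> V" "y \<in> V" "y \<notin> S" and phi: "\<phi> \<in> Phi S" and vS: "v \<in> S"
    and j: "j = r y" and a: "l \<le> a" and a1: "1 \<le> a"
    and NF: "N \<subseteq> Fam" and NR: "\<forall>G\<in>N. (j, G) \<in> R"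
    and Nrel: "\<forall>G\<in>N. \<forall>z\<in>S. (\<phi> z \<subset> G \<longleftrightarrow> lt z y) \<and> (G \<subset> \<phi> z \<longleftrightarrow> lt y z)"
    and Nc: "3 * \<gamma> * real n ^ a \<le> real (card N)"
  shows "\<gamma> / 2 * real n ^ a \<le> real (card {G. \<phi>(y := G) \<in> Phi (insert y S)})"
proof -
  have pS: "\<phi> \<in> S \<rightarrow>\<^sub>E Fam" "\<phi> v = F0" "inj_on \<phi> S" "\<forall>a\<in>S. \<forall>b\<in>S. \<phi> a \<subset> \<phi> b \<longleftrightarrow> lt a b"
    "\<phi> ` S \<notin> \<Gamma>" "\<forall>a\<in>S. (r a, \<phi> a) \<in> R" using phi by (auto simp: Phi_def)
  have finS: "finite S" using S finV finite_subset by blast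
  define N' where "N' = N - \<phi> ` S - {G\<in>Fam. insert G (\<phi> ` S) \<in> \<Gamma>}"
  have finN: "finite N" using NF finFam finite_subset by blast
  have sub: "N' \<subseteq> {G. \<phi>(y := G) \<in> Phi (insert y S)}"
  proof
    fix G assume G: "G \<in> N'"
    then have GN: "G \<in> N" and Gn: "G \<notin> \<phi> ` S" and GG: "insert G (\<phi> ` S) \<notin> \<Gamma>" using NF by (auto simp: N'_def)
    let ?p = "\<phi>(y := G)"
    have "?p \<in> insert y S \<rightarrow>\<^sub>E Fam" using pS(1) GN NF S(3) by (auto simp: PiE_def extensional_def)
    moreover have "?p v = F0"
      using pS(2) vS S(3) by (cases "v = y") auto
    moreover have "inj_on ?p (insert y S)" using pS(3) Gn S(3) by (auto simp: inj_on_def)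
    moreover have "\<forall>a\<in>insert y S. \<forall>b\<in>insert y S. ?p a \<subset> ?p b \<longleftrightarrow> lt a b"
      using pS(4) Nrel GN S irr by auto
    moreover have "?p ` insert y S \<notin> \<Gamma>"
    proof -
      have "?p ` insert y S = insert G (\<phi> ` S)" using S(3) by auto
      then show ?thesis using GG by simp
    qed
    moreover have "\<forall>a\<in>insert y S. (r a, ?p a) \<in> R" using pS(6) NR GN j S(3) by auto
    ultimately have "?p \<in> Phi (insert y S)" unfolding Phi_def by blast
    then show "G \<in> {G. \<phi>(y := G) \<in> Phi (insert y S)}" by simp
  qed
  have c1: "card (\<phi> ` S) \<le> m" using card_image_le[OF finS, of \<phi>] card_mono[OF finV S(1)] mV by simp
  have c2: "real (card {G\<in>Fam. insert G (\<phi> ` S) \<in> \<Gamma>}) < \<gamma> / 2 * real n ^ l"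
    using bc2[of "\<phi> ` S"] pS(1,5) by (auto simp: PiE_def Pi_def)
  have "card N \<le> card N' + card (\<phi> ` S) + card {G\<in>Fam. insert G (\<phi> ` S) \<in> \<Gamma>}"
  proof -
    have "N \<subseteq> N' \<union> \<phi> ` S \<union> {G\<in>Fam. insert G (\<phi> ` S) \<in> \<Gamma>}" using NF by (auto simp: N'_def)
    then have "card N \<le> card (N' \<union> \<phi> ` S \<union> {G\<in>Fam. insert G (\<phi> ` S) \<in> \<Gamma>})"
      by (rule card_mono[rotated]) (use finN finS finFam in \<open>auto simp: N'_def\<close>)
    also have "\<dots> \<le> card N' + card (\<phi> ` S) + card {G\<in>Fam. insert G (\<phi> ` S) \<in> \<Gamma>}"
      by (meson add_mono_thms_linordered_semiring(3) card_Un_le order_trans)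
    finally show ?thesis .
  qed
  then have "real (card N') \<ge> real (card N) - real m - \<gamma> / 2 * real n ^ l"
    using c1 c2 by linarith
  moreover have "real n ^ l \<le> real n ^ a" using a n1 by (intro power_increasing) auto
  moreover have "real n \<le> real n ^ a"
  proof -
    have "real n ^ 1 \<le> real n ^ a" using a1 n1 by (intro power_increasing) auto
    then show ?thesis by simp
  qed
  ultimately have "real (card N') \<ge> \<gamma> / 2 * real n ^ a"
  proof -
    assume h1: "real (card N') \<ge> real (card N) - real m - \<gamma> / 2 * real n ^ l"
      and h2: "real n ^ l \<le> real n ^ a" and h3: "real n \<le> real n ^ a"
    have "\<gamma> / 2 * real n ^ l \<le> \<gamma> / 2 * real n ^ a" using h2 gpos by simp
    moreover have "2 * \<gamma> * real n \<le> 2 * \<gamma> * real n ^ a" using h3 gpos by simp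
    ultimately show ?thesis using h1 Nc gm by linarith
  qed
  moreover have "card N' \<le> card {G. \<phi>(y := G) \<in> Phi (insert y S)}"
  proof (rule card_mono[OF _ sub])
    have "{G. \<phi>(y := G) \<in> Phi (insert y S)} \<subseteq> Fam" by (auto simp: Phi_def PiE_def Pi_def)
    then show "finite {G. \<phi>(y := G) \<in> Phi (insert y S)}" using finFam finite_subset by blast
  qed
  ultimately show ?thesis by linarith
qed

lemma nc: "\<not> graph_has_cycle V (hasse_adj V lt)" using tp by (simp add: tree_poset_def)

lemma rh1: "a \<in> V \<Longrightarrow> r a \<in> {1..q}" using rh by (simp add: rev_hom_def)
lemma rh2: "a \<in> V \<Longrightarrow> b \<in> V \<Longrightarrow> lt a b \<Longrightarrow> r a > r b" using rh by (simp add: rev_hom_def)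

lemma ext_up:
  assumes SV: "S \<subseteq> V" and vS: "v \<in> S" and xS: "x \<in> S" and yV: "y \<in> V" and yS: "y \<notin> S"
    and xy: "hasse_edge V lt x y" and uniq: "\<forall>x'\<in>S. hasse_adj V lt x' y \<longrightarrow> x' = x"
    and conn: "\<forall>a\<in>S. \<forall>b\<in>S. (wk V lt S)\<^sup>*\<^sup>* a b" and phi: "\<phi> \<in> Phi S"
  shows "\<gamma> / 2 * real n ^ (l * (r x - r y)) \<le> real (card {G. \<phi>(y := G) \<in> Phi (insert y S)})"
proof -
  have pS: "\<phi> \<in> S \<rightarrow>\<^sub>E Fam" "inj_on \<phi> S" "\<forall>a\<in>S. \<forall>b\<in>S. \<phi> a \<subset> \<phi> b \<longleftrightarrow> lt a b"
    "\<forall>a\<in>S. (r a, \<phi> a) \<in> R" using phi by (auto simp: Phi_def)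
  have finS: "finite S" using SV finV finite_subset by blast
  have xV: "x \<in> V" using xS SV by auto
  have lxy: "lt x y" using xy by (simp add: hasse_edge_def)
  define i where "i = r x"
  define j where "j = r y"
  have i: "i \<in> {1..q}" and j: "j \<in> {1..q}" using rh1 xV yV by (auto simp: i_def j_def)
  have ji: "j < i" using rh2[OF xV yV lxy] by (simp add: i_def j_def)
  define a where "a = l * (i - j)"
  define F' where "F' = \<phi> x"
  define k where "k = card F'"
  have F'F: "F' \<in> Fam" using pS(1) xS by (auto simp: F'_def)
  have F'n: "F' \<subseteq> {1..n}" using FamS F'F by blast
  have iF'R: "(i, F') \<in> R" using pS(4) xS by (simp add: i_def F'_def)
  define Inc where "Inc = {z\<in>S. \<not> lt z y \<and> \<not> lt y z}"
  define Hs where "Hs = \<phi> ` Inc"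
  define P where "P = (\<lambda>x'. \<forall>i'\<in>{1..q}. (i', vert n Fam q x' i') \<in> R)"
  define D where "D = {x'\<in>Win n Fam q. P x' \<and> vert n Fam q x' i = F'}"
  define N where "N = {G. \<exists>x'\<in>D. vert n Fam q x' j = G \<and> (\<forall>H\<in>Hs. \<not> G \<subseteq> H \<and> \<not> H \<subseteq> G)}"
  have rel1: "lt z y \<Longrightarrow> z = x \<or> lt z x" and rel2: "\<not> lt y z" if "z \<in> S" for z
    using rel_up[OF sp nc SV yV yS xS xy uniq conn that] by auto
  have finH: "finite Hs" using finS by (simp add: Hs_def Inc_def)
  have hH: "card Hs \<le> m"
  proof -
    have "card Hs \<le> card Inc" unfolding Hs_def by (rule card_image_le) (use finS in \<open>simp add: Inc_def\<close>)
    also have "\<dots> \<le> card V" by (rule card_mono[OF finV]) (use SV in \<open>auto simp: Inc_def\<close>)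
    finally show ?thesis using mV by simp
  qed
  have Hprop: "\<forall>H\<in>Hs. H \<subseteq> {1..n} \<and> \<not> H \<subseteq> F' \<and> (F' \<subseteq> H \<longrightarrow> card H \<le> k + T)"
  proof
    fix H assume "H \<in> Hs"
    then obtain z where z: "z \<in> S" "\<not> lt z y" "\<not> lt y z" "H = \<phi> z" by (auto simp: Hs_def Inc_def)
    have HF: "H \<in> Fam" using pS(1) z by auto
    have "\<not> H \<subseteq> F'"
    proof
      assume sub: "H \<subseteq> F'"
      show False
      proof (cases "H = F'")
        case True
        then have "z = x" using pS(2) z xS by (auto simp: F'_def inj_on_def)
        then show ?thesis using z lxy by simp
      next
        case False
        then have "\<phi> z \<subset> \<phi> x" using sub z by (auto simp: F'_def)
        then have "lt z x" using pS(3) z xS by blast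
        then have "lt z y" using trn[OF _ xV yV _ lxy] z SV by blast
        then show ?thesis using z by simp
      qed
    qed
    moreover have "card H \<le> k + T" using Tmid HF F'F by (simp add: k_def)
    ultimately show "H \<subseteq> {1..n} \<and> \<not> H \<subseteq> F' \<and> (F' \<subseteq> H \<longrightarrow> card H \<le> k + T)"
      using FamS HF by blast
  qed
  have szs: "k + T + l * q \<le> n" "l * q + T \<le> k" using sizes F'F by (auto simp: k_def)
  have aq: "a \<le> l * q"
  proof -
    have "i - j \<le> q" using i by auto
    then show ?thesis unfolding a_def by (rule mult_left_mono) simp
  qed
  have a1: "1 \<le> a" using ji l1 by (simp add: a_def)
  have Tb: "\<forall>x'\<in>Win n Fam q. vert n Fam q x' i = F' \<longrightarrow> card (vert n Fam q x' j) \<le> k + T"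
    using vert_props(1)[OF _ j] Tmid F'F by (auto simp: k_def)
  have st: "real (card N) * real (fact k * fact (n - k))
     \<ge> (real (card D) - 2 * m * T * real (fact k * fact (n - k - 1))) * real ((n - k) choose a)"
    unfolding N_def D_def
    by (rule step_up[OF FamS gp i j ji a_def F'n k_def[symmetric] _ T1 _ Tb finH hH Hprop])
       (use szs aq in auto)
  define c :: nat where "c = fact k * fact (n - k - 1)"
  define M :: nat where "M = fact k * fact (n - k)"
  have nk: "n - k \<ge> 1" using szs T1 by simp
  have Mc: "real M = real (n - k) * real c"
  proof -
    have e: "n - k = Suc (n - k - 1)" using nk by simp
    have "fact (n - k) = (fact (Suc (n - k - 1)) :: nat)" using e by (rule arg_cong)
    also have "\<dots> = Suc (n - k - 1) * fact (n - k - 1)" by simp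
    finally have "fact (n - k) = (n - k) * fact (n - k - 1)" using e by simp
    then show ?thesis by (simp add: M_def c_def)
  qed
  have cD: "\<delta> * real M \<le> real (card D)"
    using stab iF'R by (simp add: D_def P_def M_def k_def)
  have cB: "2 * m * T * real c \<le> \<delta> / 2 * real M"
  proof -
    have "4 * real m * real T \<le> \<delta> * real (n - k)" using bigN F'F by (simp add: k_def)
    then have "4 * real m * real T * real c \<le> \<delta> * real (n - k) * real c" by (intro mult_right_mono) auto
    then show ?thesis using Mc by simp
  qed
  have Mpos: "real M > 0" by (simp add: M_def)
  have "real (card N) * real M \<ge> \<delta> / 2 * real M * real ((n - k) choose a)"
  proof -
    have "\<delta> / 2 * real M \<le> real (card D) - 2 * m * T * real c" using cD cB by simp
    then have "\<delta> / 2 * real M * real ((n - k) choose a) \<le> (real (card D) - 2 * m * T * real c) * real ((n - k) choose a)"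
      by (intro mult_right_mono) auto
    then show ?thesis unfolding M_def c_def by (rule order_trans[OF _ st])
  qed
  then have "real M * (\<delta> / 2 * real ((n - k) choose a)) \<le> real M * real (card N)"
    by (simp only: mult_ac)
  then have "real (card N) \<ge> \<delta> / 2 * real ((n - k) choose a)" using Mpos
    by (rule mult_left_le_imp_le)
  moreover have "3 * \<gamma> * real n ^ a \<le> \<delta> / 2 * real ((n - k) choose a)" using binom F'F a1 aq by (simp add: k_def)
  ultimately have Nc: "3 * \<gamma> * real n ^ a \<le> real (card N)" by linarith
  have NF: "N \<subseteq> Fam" using vert_props(1)[OF _ j] by (auto simp: N_def D_def)
  have NR: "\<forall>G\<in>N. (j, G) \<in> R" using j by (auto simp: N_def D_def P_def)
  have Nrel: "\<forall>G\<in>N. \<forall>z\<in>S. (\<phi> z \<subset> G \<longleftrightarrow> lt z y) \<and> (G \<subset> \<phi> z \<longleftrightarrow> lt y z)"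
  proof (intro ballI)
    fix G z assume G: "G \<in> N" and z: "z \<in> S"
    obtain x' where x': "x' \<in> D" "vert n Fam q x' j = G" and nH: "\<forall>H\<in>Hs. \<not> G \<subseteq> H \<and> \<not> H \<subseteq> G"
      using G by (auto simp: N_def)
    have FG: "F' \<subset> G" using vert_sub(1)[OF _ i j ji gp, of x'] x' by (auto simp: D_def)
    have zV: "z \<in> V" using z SV by auto
    have A: "\<phi> z \<subset> G \<longleftrightarrow> lt z y"
    proof
      assume zG: "\<phi> z \<subset> G"
      show "lt z y"
      proof (rule ccontr)
        assume "\<not> lt z y"
        then have "\<phi> z \<in> Hs" using z rel2[OF z] by (auto simp: Hs_def Inc_def)
        then show False using nH zG by blast
      qed
    next
      assume "lt z y"
      then have "z = x \<or> lt z x" using rel1[OF z] by blast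
      then show "\<phi> z \<subset> G"
      proof
        assume "z = x" then show ?thesis using FG by (simp add: F'_def)
      next
        assume "lt z x" then have "\<phi> z \<subset> \<phi> x" using pS(3) z xS by blast
        then show ?thesis using FG by (auto simp: F'_def)
      qed
    qed
    have B: "\<not> G \<subset> \<phi> z"
    proof
      assume Gz: "G \<subset> \<phi> z"
      show False
      proof (cases "lt z y")
        case True
        then have "z = x \<or> lt z x" using rel1[OF z] by blast
        then have "\<phi> z \<subseteq> F'"
        proof
          assume "lt z x" then have "\<phi> z \<subset> \<phi> x" using pS(3) z xS by blast
          then show ?thesis by (auto simp: F'_def)
        qed (simp add: F'_def)
        then show False using Gz FG by blast
      next
        case False
        then have "\<phi> z \<in> Hs" using z rel2[OF z] by (auto simp: Hs_def Inc_def)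
        then show False using nH Gz by blast
      qed
    qed
    show "(\<phi> z \<subset> G \<longleftrightarrow> lt z y) \<and> (G \<subset> \<phi> z \<longleftrightarrow> lt y z)" using A B rel2[OF z] by blast
  qed
  have "\<gamma> / 2 * real n ^ a \<le> real (card {G. \<phi>(y := G) \<in> Phi (insert y S)})"
  proof (rule finish[OF SV yV yS phi vS j_def _ a1 NF NR Nrel Nc])
    have "1 \<le> i - j" using ji by simp
    then show "l \<le> a" unfolding a_def by (metis mult.right_neutral mult_le_mono2)
  qed
  then show ?thesis by (simp add: a_def i_def j_def)
qed

lemma ext_down:
  assumes SV: "S \<subseteq> V" and vS: "v \<in> S" and xS: "x \<in> S" and yV: "y \<in> V" and yS: "y \<notin> S"
    and xy: "hasse_edge V lt y x" and uniq: "\<forall>x'\<in>S. hasse_adj V lt x' y \<longrightarrow> x' = x"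
    and conn: "\<forall>a\<in>S. \<forall>b\<in>S. (wk V lt S)\<^sup>*\<^sup>* a b" and phi: "\<phi> \<in> Phi S"
  shows "\<gamma> / 2 * real n ^ (l * (r y - r x)) \<le> real (card {G. \<phi>(y := G) \<in> Phi (insert y S)})"
proof -
  have pS: "\<phi> \<in> S \<rightarrow>\<^sub>E Fam" "inj_on \<phi> S" "\<forall>a\<in>S. \<forall>b\<in>S. \<phi> a \<subset> \<phi> b \<longleftrightarrow> lt a b"
    "\<forall>a\<in>S. (r a, \<phi> a) \<in> R" using phi by (auto simp: Phi_def)
  have finS: "finite S" using SV finV finite_subset by blast
  have xV: "x \<in> V" using xS SV by auto
  have lxy: "lt y x" using xy by (simp add: hasse_edge_def)
  define i where "i = r x"
  define j where "j = r y"
  have i: "i \<in> {1..q}" and j: "j \<in> {1..q}" using rh1 xV yV by (auto simp: i_def j_def)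
  have ji: "i < j" using rh2[OF yV xV lxy] by (simp add: i_def j_def)
  define a where "a = l * (j - i)"
  define F' where "F' = \<phi> x"
  define k where "k = card F'"
  have F'F: "F' \<in> Fam" using pS(1) xS by (auto simp: F'_def)
  have F'n: "F' \<subseteq> {1..n}" using FamS F'F by blast
  have iF'R: "(i, F') \<in> R" using pS(4) xS by (simp add: i_def F'_def)
  define Inc where "Inc = {z\<in>S. \<not> lt z y \<and> \<not> lt y z}"
  define Hs where "Hs = \<phi> ` Inc"
  define P where "P = (\<lambda>x'. \<forall>i'\<in>{1..q}. (i', vert n Fam q x' i') \<in> R)"
  define D where "D = {x'\<in>Win n Fam q. P x' \<and> vert n Fam q x' i = F'}"
  define N where "N = {G. \<exists>x'\<in>D. vert n Fam q x' j = G \<and> (\<forall>H\<in>Hs. \<not> G \<subseteq> H \<and> \<not> H \<subseteq> G)}"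
  have rel1: "lt y z \<Longrightarrow> z = x \<or> lt x z" and rel2: "\<not> lt z y" if "z \<in> S" for z
    using rel_down[OF sp nc SV yV yS xS xy uniq conn that] by auto
  have finH: "finite Hs" using finS by (simp add: Hs_def Inc_def)
  have hH: "card Hs \<le> m"
  proof -
    have "card Hs \<le> card Inc" unfolding Hs_def by (rule card_image_le) (use finS in \<open>simp add: Inc_def\<close>)
    also have "\<dots> \<le> card V" by (rule card_mono[OF finV]) (use SV in \<open>auto simp: Inc_def\<close>)
    finally show ?thesis using mV by simp
  qed
  have Hprop: "\<forall>H\<in>Hs. H \<subseteq> {1..n} \<and> \<not> F' \<subseteq> H \<and> (H \<subseteq> F' \<longrightarrow> k \<le> card H + T)"
  proof
    fix H assume "H \<in> Hs"
    then obtain z where z: "z \<in> S" "\<not> lt z y" "\<not> lt y z" "H = \<phi> z" by (auto simp: Hs_def Inc_def)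
    have HF: "H \<in> Fam" using pS(1) z by auto
    have "\<not> F' \<subseteq> H"
    proof
      assume sub: "F' \<subseteq> H"
      show False
      proof (cases "H = F'")
        case True
        then have "z = x" using pS(2) z xS by (auto simp: F'_def inj_on_def)
        then show ?thesis using z lxy by simp
      next
        case False
        then have "\<phi> x \<subset> \<phi> z" using sub z by (auto simp: F'_def)
        then have "lt x z" using pS(3) z xS by blast
        then have "lt y z" using trn[OF yV xV _ lxy] z SV by blast
        then show ?thesis using z by simp
      qed
    qed
    moreover have "k \<le> card H + T" using Tmid HF F'F by (simp add: k_def)
    ultimately show "H \<subseteq> {1..n} \<and> \<not> F' \<subseteq> H \<and> (H \<subseteq> F' \<longrightarrow> k \<le> card H + T)"
      using FamS HF by blast
  qed
  have szs: "k + T + l * q \<le> n" "l * q + T \<le> k" using sizes F'F by (auto simp: k_def)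
  have aq: "a \<le> l * q"
  proof -
    have "j - i \<le> q" using j by auto
    then show ?thesis unfolding a_def by (rule mult_left_mono) simp
  qed
  have a1: "1 \<le> a" using ji l1 by (simp add: a_def)
  have Tb: "\<forall>x'\<in>Win n Fam q. vert n Fam q x' i = F' \<longrightarrow> k \<le> card (vert n Fam q x' j) + T"
    using vert_props(1)[OF _ j] Tmid F'F by (auto simp: k_def)
  have st: "real (card N) * real (fact k * fact (n - k))
     \<ge> (real (card D) - 2 * m * T * real (fact (k - 1) * fact (n - k))) * real (k choose a)"
    unfolding N_def D_def
    by (rule step_down[OF FamS gp i j ji a_def F'n k_def[symmetric] T1 _ Tb finH hH Hprop])
       (use szs aq in auto)
  define c :: nat where "c = fact (k - 1) * fact (n - k)"
  define M :: nat where "M = fact k * fact (n - k)"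
  have nk: "k \<ge> 1" using szs T1 by simp
  have Mc: "real M = real k * real c"
  proof -
    have e: "k = Suc (k - 1)" using nk by simp
    have "fact k = (fact (Suc (k - 1)) :: nat)" using e by (rule arg_cong)
    also have "\<dots> = Suc (k - 1) * fact (k - 1)" by simp
    finally have "fact k = k * fact (k - 1)" using e by simp
    then show ?thesis by (simp add: M_def c_def)
  qed
  have cD: "\<delta> * real M \<le> real (card D)"
    using stab iF'R by (simp add: D_def P_def M_def k_def)
  have cB: "2 * m * T * real c \<le> \<delta> / 2 * real M"
  proof -
    have "4 * real m * real T \<le> \<delta> * real k" using bigN F'F by (simp add: k_def)
    then have "4 * real m * real T * real c \<le> \<delta> * real k * real c" by (intro mult_right_mono) auto
    then show ?thesis using Mc by simp
  qed
  have Mpos: "real M > 0" by (simp add: M_def)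
  have "real (card N) * real M \<ge> \<delta> / 2 * real M * real (k choose a)"
  proof -
    have "\<delta> / 2 * real M \<le> real (card D) - 2 * m * T * real c" using cD cB by simp
    then have "\<delta> / 2 * real M * real (k choose a) \<le> (real (card D) - 2 * m * T * real c) * real (k choose a)"
      by (intro mult_right_mono) auto
    then show ?thesis unfolding M_def c_def by (rule order_trans[OF _ st])
  qed
  then have "real M * (\<delta> / 2 * real (k choose a)) \<le> real M * real (card N)"
    by (simp only: mult_ac)
  then have "real (card N) \<ge> \<delta> / 2 * real (k choose a)" using Mpos
    by (rule mult_left_le_imp_le)
  moreover have "3 * \<gamma> * real n ^ a \<le> \<delta> / 2 * real (k choose a)" using binom F'F a1 aq by (simp add: k_def)
  ultimately have Nc: "3 * \<gamma> * real n ^ a \<le> real (card N)" by linarith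
  have NF: "N \<subseteq> Fam" using vert_props(1)[OF _ j] by (auto simp: N_def D_def)
  have NR: "\<forall>G\<in>N. (j, G) \<in> R" using j by (auto simp: N_def D_def P_def)
  have Nrel: "\<forall>G\<in>N. \<forall>z\<in>S. (\<phi> z \<subset> G \<longleftrightarrow> lt z y) \<and> (G \<subset> \<phi> z \<longleftrightarrow> lt y z)"
  proof (intro ballI)
    fix G z assume G: "G \<in> N" and z: "z \<in> S"
    obtain x' where x': "x' \<in> D" "vert n Fam q x' j = G" and nH: "\<forall>H\<in>Hs. \<not> G \<subseteq> H \<and> \<not> H \<subseteq> G"
      using G by (auto simp: N_def)
    have FG: "G \<subset> F'" using vert_sub(1)[OF _ j i ji gp, of x'] x' by (auto simp: D_def)
    have zV: "z \<in> V" using z SV by auto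
    have A: "G \<subset> \<phi> z \<longleftrightarrow> lt y z"
    proof
      assume zG: "G \<subset> \<phi> z"
      show "lt y z"
      proof (rule ccontr)
        assume "\<not> lt y z"
        then have "\<phi> z \<in> Hs" using z rel2[OF z] by (auto simp: Hs_def Inc_def)
        then show False using nH zG by blast
      qed
    next
      assume "lt y z"
      then have "z = x \<or> lt x z" using rel1[OF z] by blast
      then show "G \<subset> \<phi> z"
      proof
        assume "z = x" then show ?thesis using FG by (simp add: F'_def)
      next
        assume "lt x z" then have "\<phi> x \<subset> \<phi> z" using pS(3) z xS by blast
        then show ?thesis using FG by (auto simp: F'_def)
      qed
    qed
    have B: "\<not> \<phi> z \<subset> G"
    proof
      assume Gz: "\<phi> z \<subset> G"
      show False
      proof (cases "lt y z")
        case True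
        then have "z = x \<or> lt x z" using rel1[OF z] by blast
        then have "F' \<subseteq> \<phi> z"
        proof
          assume "lt x z" then have "\<phi> x \<subset> \<phi> z" using pS(3) z xS by blast
          then show ?thesis by (auto simp: F'_def)
        qed (simp add: F'_def)
        then show False using Gz FG by blast
      next
        case False
        then have "\<phi> z \<in> Hs" using z rel2[OF z] by (auto simp: Hs_def Inc_def)
        then show False using nH Gz by blast
      qed
    qed
    show "(\<phi> z \<subset> G \<longleftrightarrow> lt z y) \<and> (G \<subset> \<phi> z \<longleftrightarrow> lt y z)" using A B rel2[OF z] by blast
  qed
  have "\<gamma> / 2 * real n ^ a \<le> real (card {G. \<phi>(y := G) \<in> Phi (insert y S)})"
  proof (rule finish[OF SV yV yS phi vS j_def _ a1 NF NR Nrel Nc])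
    have "1 \<le> j - i" using ji by simp
    then show "l \<le> a" unfolding a_def by (metis mult.right_neutral mult_le_mono2)
  qed
  then show ?thesis by (simp add: a_def i_def j_def)
qed

definition Ed :: "nat set \<Rightarrow> (nat \<times> nat) set" where
  "Ed S = {e \<in> hasse_diagram V lt. fst e \<in> S \<and> snd e \<in> S}"

definition fw :: "nat \<times> nat \<Rightarrow> real" where
  "fw e = real n ^ (l * nat \<bar>int (r (snd e)) - int (r (fst e))\<bar>)"

lemma finEd: "finite (Ed S)"
proof -
  have "Ed S \<subseteq> V \<times> V" by (auto simp: Ed_def hasse_diagram_def hasse_edge_def)
  then show ?thesis using finV finite_subset by blast
qed

lemma count_base: "1 \<le> real (card (Phi {v}))"
proof -
  have F0F: "F0 \<in> Fam" using F0R RS by auto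
  define \<phi> where "\<phi> = (\<lambda>z. if z = v then F0 else undefined)"
  have "\<phi> \<in> Phi {v}" using F0F bc1 F0R irr[OF vV] by (auto simp: Phi_def \<phi>_def PiE_def extensional_def)
  then have "Phi {v} \<noteq> {}" by blast
  then have "card (Phi {v}) \<ge> 1" using finPhi[of "{v}"] by (simp add: Suc_leI card_gt_0_iff)
  then show ?thesis by simp
qed

lemma count_step:
  assumes SV: "S \<subseteq> V" and vS: "v \<in> S" and xS: "x \<in> S" and yV: "y \<in> V" and yS: "y \<notin> S"
    and adj: "hasse_adj V lt x y" and uniq: "\<forall>x'\<in>S. hasse_adj V lt x' y \<longrightarrow> x' = x"
    and conn: "\<forall>a\<in>S. \<forall>b\<in>S. (wk V lt S)\<^sup>*\<^sup>* a b"
    and IH: "(\<gamma> / 2) ^ (card S - 1) * (\<Prod>e\<in>Ed S. fw e) \<le> real (card (Phi S))"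
  shows "(\<gamma> / 2) ^ (card (insert y S) - 1) * (\<Prod>e\<in>Ed (insert y S). fw e) \<le> real (card (Phi (insert y S)))"
proof -
  have finS: "finite S" using SV finV finite_subset by blast
  define ex where "ex = l * nat \<bar>int (r y) - int (r x)\<bar>"
  define enew where "enew = (if lt x y then (x, y) else (y, x))"
  have fnew: "fw enew = real n ^ ex"
    by (simp add: fw_def enew_def ex_def abs_minus_commute)
  have perphi: "\<gamma> / 2 * real n ^ ex \<le> real (card {G. \<phi>(y := G) \<in> Phi (insert y S)})" if phi: "\<phi> \<in> Phi S" for \<phi>
  proof (cases "hasse_edge V lt x y")
    case True
    have xV: "x \<in> V" using xS SV by auto
    have "r x > r y" using rh2[OF xV yV] True by (simp add: hasse_edge_def)
    then have "\<bar>int (r y) - int (r x)\<bar> = int (r x - r y)" by (simp add: of_nat_diff)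
    then have "ex = l * (r x - r y)" unfolding ex_def by (simp only: nat_int)
    then show ?thesis using ext_up[OF SV vS xS yV yS True uniq conn phi] by simp
  next
    case False
    then have he: "hasse_edge V lt y x" using adj by (simp add: hasse_adj_def)
    have xV: "x \<in> V" using xS SV by auto
    have "r y > r x" using rh2[OF yV xV] he by (simp add: hasse_edge_def)
    then have "\<bar>int (r y) - int (r x)\<bar> = int (r y - r x)" by (simp add: of_nat_diff)
    then have "ex = l * (r y - r x)" unfolding ex_def by (simp only: nat_int)
    then show ?thesis using ext_down[OF SV vS xS yV yS he uniq conn phi] by simp
  qed
  define Img where "Img = (\<lambda>\<phi>. (\<lambda>G. \<phi>(y := G)) ` {G. \<phi>(y := G) \<in> Phi (insert y S)})"
  have finG: "finite {G. \<phi>(y := G) \<in> Phi (insert y S)}" for \<phi>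
  proof -
    have "{G. \<phi>(y := G) \<in> Phi (insert y S)} \<subseteq> Fam" by (auto simp: Phi_def PiE_def Pi_def)
    then show ?thesis using finFam finite_subset by blast
  qed
  have cImg: "card (Img \<phi>) = card {G. \<phi>(y := G) \<in> Phi (insert y S)}" for \<phi>
    unfolding Img_def by (rule card_image) (rule inj_onI, metis fun_upd_same)
  have sub: "(\<Union>\<phi>\<in>Phi S. Img \<phi>) \<subseteq> Phi (insert y S)" by (auto simp: Img_def)
  have disj: "Img \<phi>1 \<inter> Img \<phi>2 = {}" if "\<phi>1 \<in> Phi S" "\<phi>2 \<in> Phi S" "\<phi>1 \<noteq> \<phi>2" for \<phi>1 \<phi>2
  proof (rule ccontr)
    assume "Img \<phi>1 \<inter> Img \<phi>2 \<noteq> {}"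
    then obtain G1 G2 where e: "\<phi>1(y := G1) = \<phi>2(y := G2)" by (auto simp: Img_def)
    have "\<phi>1 y = undefined" "\<phi>2 y = undefined" using that(1,2) yS by (auto simp: Phi_def PiE_def extensional_def)
    then have "\<phi>1 = \<phi>2" using e by (metis fun_upd_triv fun_upd_upd)
    then show False using that(3) by simp
  qed
  have e1: "card (\<Union>\<phi>\<in>Phi S. Img \<phi>) = (\<Sum>\<phi>\<in>Phi S. card (Img \<phi>))"
    by (rule card_UN_disjoint) (use finPhi[OF finS] finG disj in \<open>auto simp: Img_def\<close>)
  have e2: "card (\<Union>\<phi>\<in>Phi S. Img \<phi>) \<le> card (Phi (insert y S))"
    by (rule card_mono[OF _ sub]) (simp add: finPhi finS)
  have "(\<Sum>\<phi>\<in>Phi S. card (Img \<phi>)) \<le> card (Phi (insert y S))" using e1 e2 by simp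
  then have c1: "real (\<Sum>\<phi>\<in>Phi S. card (Img \<phi>)) \<le> real (card (Phi (insert y S)))" by (simp only: of_nat_le_iff)
  have "real (card (Phi S)) * (\<gamma> / 2 * real n ^ ex) = (\<Sum>\<phi>\<in>Phi S. \<gamma> / 2 * real n ^ ex)" by simp
  also have "\<dots> \<le> (\<Sum>\<phi>\<in>Phi S. real (card (Img \<phi>)))"
  proof (rule sum_mono)
    fix \<phi> assume "\<phi> \<in> Phi S"
    then show "\<gamma> / 2 * real n ^ ex \<le> real (card (Img \<phi>))" unfolding cImg by (rule perphi)
  qed
  also have "\<dots> = real (\<Sum>\<phi>\<in>Phi S. card (Img \<phi>))" by simp
  finally have c2: "real (card (Phi S)) * (\<gamma> / 2 * real n ^ ex) \<le> real (card (Phi (insert y S)))" using c1 by linarith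
  have Edi: "Ed (insert y S) = insert enew (Ed S)" "enew \<notin> Ed S"
    using edges_insert[OF sp SV xS yV yS adj uniq] by (simp_all add: Ed_def enew_def)
  have prod: "(\<Prod>e\<in>Ed (insert y S). fw e) = real n ^ ex * (\<Prod>e\<in>Ed S. fw e)"
    using Edi finEd fnew by simp
  have cS: "card (insert y S) - 1 = Suc (card S - 1)"
  proof -
    have "card S \<ge> 1" using vS finS by (metis One_nat_def Suc_leI card_gt_0_iff empty_iff)
    then show ?thesis using finS yS by simp
  qed
  have "(\<gamma> / 2) ^ (card (insert y S) - 1) * (\<Prod>e\<in>Ed (insert y S). fw e)
      = (\<gamma> / 2 * real n ^ ex) * ((\<gamma> / 2) ^ (card S - 1) * (\<Prod>e\<in>Ed S. fw e))"
    unfolding cS prod by simp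
  also have "\<dots> \<le> (\<gamma> / 2 * real n ^ ex) * real (card (Phi S))"
    by (rule mult_left_mono[OF IH]) (use gpos in simp)
  also have "\<dots> \<le> real (card (Phi (insert y S)))" using c2 by (simp add: mult.commute)
  finally show ?thesis .
qed

lemma count_all:
  "(\<gamma> / 2) ^ (card V - 1) * (\<Prod>(x, y)\<in>hasse_diagram V lt. real n ^ (l * nat \<bar>int (r y) - int (r x)\<bar>))
    \<le> real (card {\<phi> \<in> inj_induced_homs V lt Fam. \<phi> ` V \<notin> \<Gamma> \<and> \<phi> v = F0})"
proof -
  have QV: "(\<gamma> / 2) ^ (card V - 1) * (\<Prod>e\<in>Ed V. fw e) \<le> real (card (Phi V))"
  proof (rule tree_induct[OF tp vV, where P = "\<lambda>S. (\<gamma> / 2) ^ (card S - 1) * (\<Prod>e\<in>Ed S. fw e) \<le> real (card (Phi S))"])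
    have "Ed {v} = {}" using irr vV by (auto simp: Ed_def hasse_diagram_def hasse_edge_def)
    then show "(\<gamma> / 2) ^ (card {v} - 1) * (\<Prod>e\<in>Ed {v}. fw e) \<le> real (card (Phi {v}))"
      using count_base by simp
  next
    fix S x y assume "S \<subseteq> V" "v \<in> S" "x \<in> S" "y \<in> V" "y \<notin> S" "hasse_adj V lt x y"
      "\<forall>x'\<in>S. hasse_adj V lt x' y \<longrightarrow> x' = x" "\<forall>a\<in>S. \<forall>b\<in>S. (wk V lt S)\<^sup>*\<^sup>* a b"
      "(\<gamma> / 2) ^ (card S - 1) * (\<Prod>e\<in>Ed S. fw e) \<le> real (card (Phi S))"
    then show "(\<gamma> / 2) ^ (card (insert y S) - 1) * (\<Prod>e\<in>Ed (insert y S). fw e) \<le> real (card (Phi (insert y S)))"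
      by (rule count_step)
  qed
  have EdV: "Ed V = hasse_diagram V lt" by (auto simp: Ed_def hasse_diagram_def hasse_edge_def)
  have "(\<Prod>e\<in>Ed V. fw e) = (\<Prod>(x, y)\<in>hasse_diagram V lt. real n ^ (l * nat \<bar>int (r y) - int (r x)\<bar>))"
    unfolding EdV fw_def by (simp add: case_prod_beta)
  moreover have "card (Phi V) \<le> card {\<phi> \<in> inj_induced_homs V lt Fam. \<phi> ` V \<notin> \<Gamma> \<and> \<phi> v = F0}"
  proof (rule card_mono)
    have "{\<phi> \<in> inj_induced_homs V lt Fam. \<phi> ` V \<notin> \<Gamma> \<and> \<phi> v = F0} \<subseteq> V \<rightarrow>\<^sub>E Fam"
      by (auto simp: inj_induced_homs_def)
    then show "finite {\<phi> \<in> inj_induced_homs V lt Fam. \<phi> ` V \<notin> \<Gamma> \<and> \<phi> v = F0}"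
      using finite_PiE[OF finV, of "\<lambda>_. Fam"] finFam finite_subset by blast
    show "Phi V \<subseteq> {\<phi> \<in> inj_induced_homs V lt Fam. \<phi> ` V \<notin> \<Gamma> \<and> \<phi> v = F0}"
      by (auto simp: Phi_def inj_induced_homs_def)
  qed
  ultimately show ?thesis using QV by (metis (no_types, lifting) of_nat_le_iff order_trans)
qed

end

lemma W_bound:
  fixes x :: real assumes x: "1 \<le> x"
  shows "(x powr (1/4)) ^ 4 = x" "2 * sqrt (x * ln x) \<le> 3 * (x powr (1/4)) ^ 3"
proof -
  define s where "s = x powr (1/4)"
  have x0: "x \<noteq> 0" using x by simp
  have s0: "s \<ge> 0" by (simp add: s_def)
  have "s ^ 4 = x powr (real 4 * (1/4))" unfolding s_def by (rule powr_power[OF x0])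
  then show s4: "(x powr (1/4)) ^ 4 = x" using x by (simp add: s_def)
  have "s ^ 2 = x powr (real 2 * (1/4))" unfolding s_def by (rule powr_power[OF x0])
  then have s2: "s ^ 2 = x powr (1/2)" by simp
  have "ln x \<le> x powr (1/2) / (1/2)" by (rule ln_powr_bound[OF x]) simp
  then have lnx: "ln x \<le> 2 * s ^ 2" using s2 by simp
  have lnx0: "ln x \<ge> 0" using x by simp
  have "x * ln x \<le> s ^ 4 * (2 * s ^ 2)" using s4 lnx x unfolding s_def[symmetric]
    by (metis mult_left_mono order.trans zero_le_one)
  also have "\<dots> = 2 * s ^ 6" by (simp add: power_add[symmetric])
  also have "\<dots> \<le> 9/4 * s ^ 6" using s0 by simp
  also have "\<dots> = (3/2 * s ^ 3) ^ 2"
  proof -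
    have "(3/2 * s ^ 3) ^ 2 = (3/2) ^ 2 * (s ^ 3) ^ 2" by (rule power_mult_distrib)
    also have "(s ^ 3) ^ 2 = s ^ 6" by (simp flip: power_mult)
    finally show ?thesis by (simp add: power2_eq_square)
  qed
  finally have "sqrt (x * ln x) \<le> sqrt ((3/2 * s ^ 3) ^ 2)" by (rule real_sqrt_le_mono)
  also have "\<dots> = 3/2 * s ^ 3" using s0 by simp
  finally show "2 * sqrt (x * ln x) \<le> 3 * (x powr (1/4)) ^ 3" unfolding s_def by simp
qed


lemma n0_exists:
  fixes \<delta> \<gamma> :: real and m A :: nat
  assumes d: "\<delta> > 0" and g: "\<gamma> > 0"
  shows "\<exists>n0::nat. \<forall>n\<ge>n0. 1 \<le> n \<and> 3 * (2 * sqrt (real n * ln (real n))) + 2 + real A \<le> real n / 2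
     \<and> 2 * sqrt (real n * ln (real n)) \<le> real n / 6
     \<and> 4 * real m * (2 * (2 * sqrt (real n * ln (real n))) + 2) \<le> \<delta> * real n / 3
     \<and> real m \<le> 2 * \<gamma> * real n \<and> real A \<le> real n / 3"
proof -
  define K where "K = 36 + 144 * real m / \<delta>"
  define P1 where "P1 = K ^ 4"
  define P2 where "P2 = 48 * real m / \<delta>"
  define P3 where "P3 = real m / (2 * \<gamma>)"
  define B where "B = P1 + 4 * (2 + real A) + P2 + P3 + 3 * real A + 1"
  have K36: "K \<ge> 36" using d by (simp add: K_def)
  have Km: "\<delta> * K \<ge> 144 * real m" using d by (simp add: K_def algebra_simps)
  show ?thesis
  proof (intro exI[of _ "nat \<lceil>B\<rceil>"] allI impI)
    fix n :: nat assume n: "nat \<lceil>B\<rceil> \<le> n"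
    define x where "x = real n"
    have xB: "x \<ge> B" using n unfolding x_def by linarith
    have pos: "P1 \<ge> 0" "P2 \<ge> 0" "P3 \<ge> 0" "real A \<ge> 0" using d g K36 by (auto simp: P1_def P2_def P3_def)
    have x1: "x \<ge> 1" and xK0: "x \<ge> P1" and xA: "x \<ge> 8 + 4 * real A" "x \<ge> 3 * real A"
      and xm0: "x \<ge> P2" "x \<ge> P3" using xB pos unfolding B_def by (simp_all add: algebra_simps)
    have xK: "x \<ge> K ^ 4" using xK0 by (simp add: P1_def)
    have xm: "x \<ge> 48 * real m / \<delta>" "x \<ge> real m / (2 * \<gamma>)" using xm0 by (simp_all add: P2_def P3_def)
    define s where "s = x powr (1/4)"
    have s4: "s ^ 4 = x" and Wb: "2 * sqrt (x * ln x) \<le> 3 * s ^ 3" using W_bound[OF x1] by (auto simp: s_def)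
    have s0: "s \<ge> 0" by (simp add: s_def)
    have sK: "s \<ge> K"
    proof -
      have "(K ^ 4) powr (1/4) \<le> x powr (1/4)" by (rule powr_mono2) (use xK K36 in auto)
      moreover have "(K ^ 4) powr (1/4) = K"
      proof -
        have "K ^ 4 = K powr (real 4)" using K36 by (simp add: powr_realpow)
        then have "(K ^ 4) powr (1/4) = K powr (real 4 * (1/4))" by (simp add: powr_powr)
        then show ?thesis using K36 by simp
      qed
      ultimately show ?thesis by (simp add: s_def)
    qed
    have s3: "s ^ 3 \<ge> 0" using s0 by simp
    have sKs: "K * s ^ 3 \<le> x"
    proof -
      have "K * s ^ 3 \<le> s * s ^ 3" by (rule mult_right_mono[OF sK s3])
      also have "\<dots> = s ^ 4" by (simp add: power_Suc[symmetric] del: power_Suc)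
      finally show ?thesis using s4 by simp
    qed
    define W where "W = 2 * sqrt (x * ln x)"
    have Wb': "W \<le> 3 * s ^ 3" using Wb by (simp add: W_def)
    have a1: "36 * s ^ 3 \<le> x" using sKs K36 s3 by (meson mult_right_mono order_trans)
    have "1 \<le> n" using x1 unfolding x_def by simp
    moreover have "3 * W + 2 + real A \<le> x / 2" using Wb' a1 xA by linarith
    moreover have "W \<le> x / 6" using Wb' a1 s3 by linarith
    moreover have "4 * real m * (2 * W + 2) \<le> \<delta> * x / 3"
    proof -
      have "\<delta> * K * s ^ 3 \<ge> 144 * real m * s ^ 3" by (rule mult_right_mono[OF Km s3])
      moreover have "\<delta> * (K * s ^ 3) \<le> \<delta> * x" using sKs d by simp
      ultimately have e1: "144 * real m * s ^ 3 \<le> \<delta> * x" by (simp add: mult.assoc)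
      have "real m * W \<le> real m * (3 * s ^ 3)" using Wb' by (simp add: mult_left_mono)
      moreover have "\<delta> * x \<ge> 48 * real m" using xm(1) d by (simp add: field_simps)
      ultimately show ?thesis using e1 by (simp add: algebra_simps)
    qed
    moreover have "real m \<le> 2 * \<gamma> * x" using xm(2) g by (simp add: field_simps)
    moreover have "real A \<le> x / 3" using xA by simp
    ultimately show "1 \<le> n \<and> 3 * (2 * sqrt (real n * ln (real n))) + 2 + real A \<le> real n / 2
     \<and> 2 * sqrt (real n * ln (real n)) \<le> real n / 6
     \<and> 4 * real m * (2 * (2 * sqrt (real n * ln (real n))) + 2) \<le> \<delta> * real n / 3
     \<and> real m \<le> 2 * \<gamma> * real n \<and> real A \<le> real n / 3" unfolding W_def x_def by simp
  qed
qed


lemma binom_lower: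
  fixes N a A n :: nat
  assumes a1: "1 \<le> a" and aA: "a \<le> A" and Nn: "real n / 3 \<le> real N" and aN: "a \<le> N"
  shows "real n ^ a / (3 * real A) ^ A \<le> real (N choose a)"
proof -
  have apos: "real a > 0" using a1 by simp
  have "(real n / (3 * real a)) ^ a \<le> (real N / real a) ^ a"
  proof (rule power_mono)
    show "real n / (3 * real a) \<le> real N / real a" using Nn apos by (simp add: field_simps)
  qed (simp)
  also have "\<dots> \<le> real (N choose a)" by (rule binomial_ge_n_over_k_pow_k[OF aN])
  finally have c1: "(real n / (3 * real a)) ^ a \<le> real (N choose a)" .
  have "(3 * real a) ^ a \<le> (3 * real A) ^ a" by (rule power_mono) (use aA in auto)
  also have "\<dots> \<le> (3 * real A) ^ A" by (rule power_increasing[OF aA]) (use a1 aA in auto)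
  finally have c2: "(3 * real a) ^ a \<le> (3 * real A) ^ A" .
  have p: "(3 * real a) ^ a > 0" using apos by simp
  have "real n ^ a / (3 * real A) ^ A \<le> real n ^ a / (3 * real a) ^ a"
    by (rule divide_left_mono[OF c2]) (use p aA a1 in \<open>auto intro!: mult_pos_pos\<close>)
  also have "\<dots> = (real n / (3 * real a)) ^ a" by (simp add: power_divide)
  finally show ?thesis using c1 by linarith
qed

theorem theorem5p2:
  fixes \<epsilon> :: real and q l :: nat
  assumes "\<epsilon> > 0" and "q > 0" and "l > 0"
  shows "\<exists>\<gamma>>0. \<forall>V lt k. tree_poset V lt \<and> poset_height V lt = k \<and> q \<ge> k \<longrightarrow>
    (\<exists>n0. \<forall>n\<ge>n0. \<forall>v\<in>V. \<forall>r. rev_hom V lt q r \<longrightarrow>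
      (\<forall>\<F> \<Gamma>. \<F> \<subseteq> middle_layers n \<and> gapped l \<F> \<and>
          lubell_mass n \<F> \<ge> real q - 1 + \<epsilon> \<and>
          bounded_collection n (\<gamma> / 2) l \<F> \<Gamma> \<longrightarrow>
        (\<exists>F\<in>\<F>. real (card {\<phi> \<in> inj_induced_homs V lt \<F>. \<phi> ` V \<notin> \<Gamma> \<and> \<phi> v = F})
           \<ge> (\<gamma> / 2) ^ (card V - 1) *
              (\<Prod>(x, y)\<in>hasse_diagram V lt.
                 real n ^ (l * nat \<bar>int (r y) - int (r x)\<bar>)))))"
proof -
  define \<delta> where "\<delta> = (\<epsilon> / 2) / (real q * (real q - 1 + \<epsilon>))"
  define A where "A = l * q"
  define c0 :: real where "c0 = 1 / (3 * real A) ^ A"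
  define \<gamma> where "\<gamma> = \<delta> * c0 / 6"
  have q1: "real q \<ge> 1" using assms by simp
  have qe: "real q - 1 + \<epsilon> > 0" using assms q1 by simp
  have dpos: "\<delta> > 0" using assms qe unfolding \<delta>_def by (intro divide_pos_pos mult_pos_pos) auto
  have A1: "A \<ge> 1" using assms by (simp add: A_def)
  have c0pos: "c0 > 0" using A1 by (simp add: c0_def)
  have gpos: "\<gamma> > 0" using dpos c0pos by (simp add: \<gamma>_def)
  have qd: "real q * \<delta> * (real q - 1 + \<epsilon>) = \<epsilon> / 2"
  proof -
    have n1: "real q \<noteq> 0" "real q - 1 + \<epsilon> \<noteq> 0" using qe q1 by auto
    have "real q * \<delta> * (real q - 1 + \<epsilon>) = (real q * (real q - 1 + \<epsilon>)) * \<delta>" by (simp only: mult_ac)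
    also have "\<dots> = \<epsilon> / 2" unfolding \<delta>_def using n1 by simp
    finally show ?thesis .
  qed
  have qd2: "real q * \<delta> \<le> 1"
  proof -
    have "\<epsilon> / 2 \<le> real q - 1 + \<epsilon>" using q1 assms by simp
    then have "real q * \<delta> * (real q - 1 + \<epsilon>) \<le> 1 * (real q - 1 + \<epsilon>)" using qd by simp
    then show ?thesis using qe by (meson mult_le_cancel_right_pos)
  qed
  show ?thesis
  proof (intro exI[of _ \<gamma>] conjI allI impI)
    show "\<gamma> > 0" by (rule gpos)
  next
    fix V lt k assume H: "tree_poset V lt \<and> poset_height V lt = k \<and> q \<ge> k"
    then have tp: "tree_poset V lt" by (rule conjunct1)
    define m where "m = card V"
    obtain n0 where n0: "\<forall>n\<ge>n0. 1 \<le> n \<and> 3 * (2 * sqrt (real n * ln (real n))) + 2 + real A \<le> real n / 2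
     \<and> 2 * sqrt (real n * ln (real n)) \<le> real n / 6
     \<and> 4 * real m * (2 * (2 * sqrt (real n * ln (real n))) + 2) \<le> \<delta> * real n / 3
     \<and> real m \<le> 2 * \<gamma> * real n \<and> real A \<le> real n / 3"
      using n0_exists[OF dpos gpos, where m = m and A = A] by (elim exE) (rule that)
    show "\<exists>n0. \<forall>n\<ge>n0. \<forall>v\<in>V. \<forall>r. rev_hom V lt q r \<longrightarrow>
      (\<forall>\<F> \<Gamma>. \<F> \<subseteq> middle_layers n \<and> gapped l \<F> \<and>
          lubell_mass n \<F> \<ge> real q - 1 + \<epsilon> \<and>
          bounded_collection n (\<gamma> / 2) l \<F> \<Gamma> \<longrightarrow>
        (\<exists>F\<in>\<F>. real (card {\<phi> \<in> inj_induced_homs V lt \<F>. \<phi> ` V \<notin> \<Gamma> \<and> \<phi> v = F})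
           \<ge> (\<gamma> / 2) ^ (card V - 1) *
              (\<Prod>(x, y)\<in>hasse_diagram V lt.
                 real n ^ (l * nat \<bar>int (r y) - int (r x)\<bar>))))"
    proof (intro exI[of _ n0] allI impI ballI)
      fix n v r Fam \<Gamma>
      assume nn0: "n0 \<le> n" and vV: "v \<in> V" and rh: "rev_hom V lt q r"
        and hyp: "Fam \<subseteq> middle_layers n \<and> gapped l Fam \<and> real q - 1 + \<epsilon> \<le> lubell_mass n Fam
          \<and> bounded_collection n (\<gamma> / 2) l Fam \<Gamma>"
      define W where "W = 2 * sqrt (real n * ln (real n))"
      have nc: "1 \<le> n" "3 * W + 2 + real A \<le> real n / 2" "W \<le> real n / 6"
        "4 * real m * (2 * W + 2) \<le> \<delta> * real n / 3" "real m \<le> 2 * \<gamma> * real n" "real A \<le> real n / 3"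
        using n0 nn0 unfolding W_def by auto
      have W0: "W \<ge> 0" using nc(1) by (simp add: W_def)
      define T where "T = nat \<lceil>2 * W\<rceil> + 1"
      have T1: "1 \<le> T" by (simp add: T_def)
      have TW: "real T \<le> 2 * W + 2" "2 * W < real T" using W0 by (simp_all add: T_def) linarith+
      have FamS: "\<forall>F\<in>Fam. F \<subseteq> {1..n}" using hyp by (auto simp: middle_layers_def)
      have midF: "\<forall>F\<in>Fam. \<bar>real (card F) - real n / 2\<bar> < W" using hyp by (auto simp: middle_layers_def W_def)
      have gp: "gapped l Fam" using hyp by simp
      have finFam: "finite Fam"
      proof -
        have "Fam \<subseteq> Pow {1..n}" using FamS by auto
        then show ?thesis by (rule finite_subset) simp
      qed
      have cn: "\<forall>F\<in>Fam. card F \<le> n" using FamS card_le_n by blast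
      have Tmid: "\<forall>F\<in>Fam. \<forall>G\<in>Fam. card G \<le> card F + T"
      proof (intro ballI)
        fix F G assume "F \<in> Fam" "G \<in> Fam"
        then have "\<bar>real (card F) - real n / 2\<bar> < W" "\<bar>real (card G) - real n / 2\<bar> < W" using midF by auto
        then have "real (card G) \<le> real (card F) + real T" using TW by linarith
        then show "card G \<le> card F + T" by linarith
      qed
      have sizes: "\<forall>F\<in>Fam. card F + T + l * q \<le> n \<and> l * q + T \<le> card F"
      proof
        fix F assume "F \<in> Fam"
        then have "\<bar>real (card F) - real n / 2\<bar> < W" using midF by auto
        then have "real (card F) + real T + real A \<le> real n" "real A + real T \<le> real (card F)"
          using TW nc by linarith+
        then show "card F + T + l * q \<le> n \<and> l * q + T \<le> card F" unfolding A_def by linarith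
      qed
      have bigN: "\<forall>F\<in>Fam. 4 * real m * real T \<le> \<delta> * real (n - card F) \<and> 4 * real m * real T \<le> \<delta> * real (card F)"
      proof
        fix F assume F: "F \<in> Fam"
        then have "\<bar>real (card F) - real n / 2\<bar> < W" using midF by auto
        then have b1: "real n / 3 \<le> real (n - card F)" "real n / 3 \<le> real (card F)"
          using nc cn F by (simp_all add: of_nat_diff)
        have "4 * real m * real T \<le> 4 * real m * (2 * W + 2)" using TW by (intro mult_left_mono) auto
        also have "\<dots> \<le> \<delta> * real n / 3" by (rule nc(4))
        finally have b2: "4 * real m * real T \<le> \<delta> * (real n / 3)" by simp
        have "\<delta> * (real n / 3) \<le> \<delta> * real (n - card F)" "\<delta> * (real n / 3) \<le> \<delta> * real (card F)"
          using b1 dpos by simp_all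
        then show "4 * real m * real T \<le> \<delta> * real (n - card F) \<and> 4 * real m * real T \<le> \<delta> * real (card F)"
          using b2 by linarith
      qed
      have binom: "\<forall>F\<in>Fam. \<forall>a. 1 \<le> a \<longrightarrow> a \<le> l * q \<longrightarrow>
        3 * \<gamma> * real n ^ a \<le> \<delta> / 2 * real ((n - card F) choose a) \<and> 3 * \<gamma> * real n ^ a \<le> \<delta> / 2 * real (card F choose a)"
      proof (intro ballI allI impI)
        fix F a assume F: "F \<in> Fam" and a1: "1 \<le> a" and aA: "a \<le> l * q"
        then have "\<bar>real (card F) - real n / 2\<bar> < W" using midF by auto
        then have b1: "real n / 3 \<le> real (n - card F)" "real n / 3 \<le> real (card F)"
          using nc cn F by (simp_all add: of_nat_diff)
        have aA': "a \<le> A" using aA by (simp add: A_def)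
        have aN: "a \<le> n - card F" "a \<le> card F" using b1 nc(6) aA' by linarith+
        have e: "3 * \<gamma> * real n ^ a = \<delta> / 2 * (real n ^ a / (3 * real A) ^ A)"
          by (simp add: \<gamma>_def c0_def)
        have h1: "real n ^ a / (3 * real A) ^ A \<le> real ((n - card F) choose a)"
          by (rule binom_lower[OF a1 aA' b1(1) aN(1)])
        have h2: "real n ^ a / (3 * real A) ^ A \<le> real (card F choose a)"
          by (rule binom_lower[OF a1 aA' b1(2) aN(2)])
        have d2: "\<delta> / 2 \<ge> 0" using dpos by simp
        have g1: "\<delta> / 2 * (real n ^ a / (3 * real A) ^ A) \<le> \<delta> / 2 * real ((n - card F) choose a)"
          by (rule mult_left_mono[OF h1 d2])
        have g2: "\<delta> / 2 * (real n ^ a / (3 * real A) ^ A) \<le> \<delta> / 2 * real (card F choose a)"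
          by (rule mult_left_mono[OF h2 d2])
        show "3 * \<gamma> * real n ^ a \<le> \<delta> / 2 * real ((n - card F) choose a) \<and>
            3 * \<gamma> * real n ^ a \<le> \<delta> / 2 * real (card F choose a)"
          unfolding e using g1 g2 by (rule conjI)
      qed
      define X where "X = Win n Fam q"
      define vs where "vs = (\<lambda>x. (\<lambda>i. (i, vert n Fam q x i)) ` {1..q})"
      define \<omega> where "\<omega> = (\<lambda>u::nat \<times> nat set. \<delta> * real (fact (card (snd u)) * fact (n - card (snd u))))"
      define R0 where "R0 = {1..q} \<times> Fam"
      have om: "\<forall>u. \<omega> u \<ge> 0" using dpos by (simp add: \<omega>_def)
      obtain R where R: "R \<subseteq> R0" "\<forall>u\<in>R. real (card {x\<in>X. vs x \<subseteq> R \<and> u \<in> vs x}) \<ge> \<omega> u"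
        "real (card {x\<in>X. vs x \<subseteq> R}) \<ge> real (card {x\<in>X. vs x \<subseteq> R0}) - (\<Sum>u\<in>R0. \<omega> u)"
      proof -
        have "finite R0" using finFam by (simp add: R0_def)
        from prune[OF finite_Win[of n Fam q] om, where vs = vs, OF this] show ?thesis
          using that unfolding X_def by blast
      qed
      have XR0: "{x\<in>X. vs x \<subseteq> R0} = X"
        using vert_props(1) by (auto simp: X_def vs_def R0_def)
      define SM where "SM = (\<Sum>F\<in>Fam. real (fact (card F) * fact (n - card F)))"
      have sumR0: "(\<Sum>u\<in>R0. \<omega> u) = real q * \<delta> * SM"
      proof -
        have "(\<Sum>u\<in>R0. \<omega> u) = (\<Sum>i\<in>{1..q}. \<Sum>F\<in>Fam. \<omega> (i, F))"
          unfolding R0_def by (simp add: sum.cartesian_product)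
        also have "\<dots> = (\<Sum>i\<in>{1..q}. \<delta> * SM)" by (simp add: \<omega>_def SM_def sum_distrib_left)
        also have "\<dots> = real q * \<delta> * SM" by simp
        finally show ?thesis .
      qed
      have wc: "real (card X) \<ge> SM - fact n * (real q - 1)"
        unfolding X_def SM_def by (rule win_count[OF FamS finFam]) (use assms in simp)
      have SMe: "SM = fact n * lubell_mass n Fam" unfolding SM_def by (rule lubell_fact[OF FamS])
      have "real (card {x\<in>X. vs x \<subseteq> R}) > 0"
      proof -
        define mu where "mu = lubell_mass n Fam"
        have mu: "mu \<ge> real q - 1 + \<epsilon>" using hyp by (simp add: mu_def)
        have "mu * (1 - real q * \<delta>) \<ge> (real q - 1 + \<epsilon>) * (1 - real q * \<delta>)"
          by (rule mult_right_mono[OF mu]) (use qd2 in simp)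
        also have "(real q - 1 + \<epsilon>) * (1 - real q * \<delta>) = real q - 1 + \<epsilon> / 2"
          using qd by (simp add: algebra_simps)
        finally have k1: "mu * (1 - real q * \<delta>) - (real q - 1) > 0" using assms by simp
        have fpos: "(fact n :: real) > 0" by simp
        have "real (card {x\<in>X. vs x \<subseteq> R}) \<ge> fact n * mu - fact n * (real q - 1) - real q * \<delta> * (fact n * mu)"
          using R(3) XR0 sumR0 wc SMe by (simp add: mu_def)
        also have "fact n * mu - fact n * (real q - 1) - real q * \<delta> * (fact n * mu)
             = fact n * (mu * (1 - real q * \<delta>) - (real q - 1))" by (simp add: algebra_simps)
        finally show ?thesis using k1 fpos by (meson less_le_trans mult_pos_pos)
      qed
      then obtain x0 where x0: "x0 \<in> X" "vs x0 \<subseteq> R" by (metis (no_types, lifting) card.empty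
            empty_Collect_eq less_irrefl of_nat_0)
      have rv: "r v \<in> {1..q}" using rh vV by (simp add: rev_hom_def)
      define F0 where "F0 = vert n Fam q x0 (r v)"
      have F0R: "(r v, F0) \<in> R" using x0 rv by (auto simp: vs_def F0_def)
      have RS: "R \<subseteq> {1..q} \<times> Fam" using R(1) by (simp add: R0_def)
      have F0F: "F0 \<in> Fam" using F0R RS by auto
      have stab: "\<forall>i F. (i, F) \<in> R \<longrightarrow> \<delta> * real (fact (card F) * fact (n - card F))
         \<le> real (card {x \<in> Win n Fam q. (\<forall>i'\<in>{1..q}. (i', vert n Fam q x i') \<in> R) \<and> vert n Fam q x i = F})"
      proof (intro allI impI)
        fix i F assume iF: "(i, F) \<in> R"
        then have i: "i \<in> {1..q}" using RS by auto
        have "{x\<in>X. vs x \<subseteq> R \<and> (i, F) \<in> vs x}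
            = {x \<in> Win n Fam q. (\<forall>i'\<in>{1..q}. (i', vert n Fam q x i') \<in> R) \<and> vert n Fam q x i = F}"
        proof -
          have e1: "\<And>x. (vs x \<subseteq> R) = (\<forall>i'\<in>{1..q}. (i', vert n Fam q x i') \<in> R)"
            by (simp add: vs_def image_subset_iff)
          have e2: "\<And>x. ((i, F) \<in> vs x) = (vert n Fam q x i = F)" using i by (auto simp: vs_def)
          show ?thesis unfolding X_def
          proof (intro Collect_cong conj_cong refl)
            fix x show "(vs x \<subseteq> R) = (\<forall>i'\<in>{1..q}. (i', vert n Fam q x i') \<in> R)" by (rule e1)
            show "((i, F) \<in> vs x) = (vert n Fam q x i = F)" by (rule e2)
          qed
        qed
        then show "\<delta> * real (fact (card F) * fact (n - card F))
         \<le> real (card {x \<in> Win n Fam q. (\<forall>i'\<in>{1..q}. (i', vert n Fam q x i') \<in> R) \<and> vert n Fam q x i = F})"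
        proof -
          have "\<omega> (i, F) \<le> real (card {x\<in>X. vs x \<subseteq> R \<and> (i, F) \<in> vs x})" using R(2) iF by blast
          moreover have "\<omega> (i, F) = \<delta> * real (fact (card F) * fact (n - card F))" by (simp add: \<omega>_def)
          ultimately show ?thesis using \<open>{x\<in>X. vs x \<subseteq> R \<and> (i, F) \<in> vs x} = _\<close> by simp
        qed
      qed
      have bc: "bounded_collection n (\<gamma> / 2) l Fam \<Gamma>" using hyp by simp
      have l1: "1 \<le> l" using assms by simp
      have E: "emb n q l m T Fam \<Gamma> V lt r R v F0 \<delta> \<gamma>"
        unfolding emb_def
        apply (intro conjI)
        apply (fact FamS)
        apply (fact gp)
        apply (fact Tmid)
        apply (fact T1)
        apply (fact sizes)
        apply (fact bigN)
        apply (fact binom)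
        apply (fact nc(5))
        apply (fact nc(1))
        apply (fact gpos)
        apply (fact dpos)
        apply (fact tp)
        apply (simp add: m_def)
        apply (fact rh)
        apply (fact bc)
        apply (fact RS)
        apply (fact stab)
        apply (fact vV)
        apply (fact F0R)
        apply (fact l1)
        done
      show "\<exists>F\<in>Fam. real (card {\<phi> \<in> inj_induced_homs V lt Fam. \<phi> ` V \<notin> \<Gamma> \<and> \<phi> v = F})
           \<ge> (\<gamma> / 2) ^ (card V - 1) *
              (\<Prod>(x, y)\<in>hasse_diagram V lt. real n ^ (l * nat \<bar>int (r y) - int (r x)\<bar>))"
        using emb.count_all[OF E] F0F by blast
    qed
  qed
qed

end
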